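(* For every $\varepsilon>0$ there exists $n_0\in\mathbb{N}$ such that $\int_{Q_n}\tau\,d\mu_n\le 2(1+\varepsilon)n$ for all $n\ge n_0$.
   Context: $\mathbb{F}_2((x^{-1}))$ is the field of formal series $r=\sum_{z\in\mathbb{Z}}a_zx^z$, $a_z\in\mathbb{F}_2$, with $a_z\neq0$ for only finitely many positive $z$ (usual addition and Cauchy multiplication); $\mathbb{F}_2[x]$ is a subring. $\deg(r)=\max\{z: a_z\ne 0\}$. The polynomial part is $[r]=\sum_{z\ge0}a_zx^z\in\mathbb{F}_2[x]$. Define $S(r)=\frac{r}{x+1}$ if $[r](1)=0$ and $S(r)=\frac{xr}{x+1}$ if $[r](1)=1$ (division performed in $\mathbb{F}_2((x^{-1}))$). For $r$ with $\deg(r)\ge0$, $\tau(r)$ is the least $k\in\mathbb{N}$ with $[S^k(r)]=1$ (this is finite). For $n\in\mathbb{N}$, $Q_n=\{r\in\mathbb{F}_2((x^{-1})):\deg(r)=n\}$ and $\mu_n$ is the probability measure on $Q_n$ under which the coefficients $a_{n-1},a_{n-2},a_{n-3},\dots$ of $r$ are independent and uniformly distributed in $\mathbb{F}_2$ (equivalently, twice the restriction to $Q_n$ of the Haar probability measure on the compact additive group $\{r:\deg(r)\le n\}$). *)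

theory Defs
  imports "HOL-Probability.Probability" "HOL-Library.Z2"
    "HOL-Computational_Algebra.Formal_Laurent_Series" "HOL-Computational_Algebra.Polynomial"
begin

text \<open>F2((x^{-1})) is modelled as formal Laurent series in the variable y = x^{-1}
  over the field bit = F2: an element r has coefficient a_z = r $$ (-z) at x^z.
  The element x itself is fls_X_inv.\<close>

type_synonym F2L = "bit fls"

definition xL :: F2L where "xL = fls_X_inv"

definition coeffL :: "F2L \<Rightarrow> int \<Rightarrow> bit" where "coeffL r z = fls_nth r (- z)"

definition degL :: "F2L \<Rightarrow> int" where "degL r = - fls_subdegree r"

definition poly_part :: "F2L \<Rightarrow> bit poly" where
  "poly_part r = Poly (map (\<lambda>n. coeffL r (int n)) [0..<nat (degL r) + 1])"

definition S_map :: "F2L \<Rightarrow> F2L" where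
  "S_map r = (if poly (poly_part r) 1 = 0 then r / (xL + 1) else xL * r / (xL + 1))"

definition tau :: "F2L \<Rightarrow> nat" where
  "tau r = (LEAST k. poly_part ((S_map ^^ k) r) = 1)"

definition Q :: "nat \<Rightarrow> F2L set" where
  "Q n = {r. r \<noteq> 0 \<and> degL r = int n}"

text \<open>coin space: independent fair bits, the i-th bit being the coefficient a_{n-1-i}\<close>
definition coins :: "(nat \<Rightarrow> bool) measure" where
  "coins = PiM UNIV (\<lambda>_. measure_pmf (bernoulli_pmf (1/2)))"

definition embedQ :: "nat \<Rightarrow> (nat \<Rightarrow> bool) \<Rightarrow> F2L" where
  "embedQ n \<omega> = Abs_fls (\<lambda>j. if j = - int n then 1
        else if - int n < j then (if \<omega> (nat (j + int n - 1)) then 1 else 0) else 0)"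

definition mu :: "nat \<Rightarrow> F2L measure" where
  "mu n = embed_measure coins (embedQ n)"

end

theory Submission
  imports Defs
begin

definition Xp :: "bit poly" where "Xp = [:0,1:]"
definition X1 :: "bit poly" where "X1 = [:1,1:]"

lemma X1_nz[simp]: "X1 \<noteq> 0" by (simp add: X1_def)
lemma Xp_nz[simp]: "Xp \<noteq> 0" by (simp add: Xp_def)
lemma degree_X1[simp]: "degree X1 = 1" by (simp add: X1_def)
lemma degree_Xp[simp]: "degree Xp = 1" by (simp add: Xp_def)
lemma degree_X1_pow[simp]: "degree (X1 ^ n) = n" by (simp add: degree_power_eq)
lemma degree_Xp_pow[simp]: "degree (Xp ^ n) = n" by (simp add: degree_power_eq)
lemma poly_X1[simp]: "poly X1 x = 1 + x" by (simp add: X1_def)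
lemma poly_Xp[simp]: "poly Xp x = x" by (simp add: Xp_def)

lemma bit_cases2: "(x::bit) = 0 \<or> x = 1" by (cases x) auto

lemma bit_add_self[simp]: "(x::bit) + x = 0" by (cases x) auto
lemma bpoly_add_self[simp]: "(p::bit poly) + p = 0"
proof (rule poly_eqI)
  fix n show "coeff (p + p) n = coeff 0 n" by (simp only: coeff_add bit_add_self coeff_0)
qed
lemma bpoly_minus[simp]: "- (p::bit poly) = p"
  by (rule poly_eqI) simp
lemma bpoly_diff[simp]: "(p::bit poly) - q = p + q"
  by (rule poly_eqI) simp

lemma div_unique_poly:
  fixes a b q r :: "bit poly"
  assumes "b \<noteq> 0" "a = b * q + r" "r = 0 \<or> degree r < degree b"
  shows "a div b = q"
proof -
  have "a div b = (b*q) div b + r div b" using assms(2) by (simp add: poly_div_add_left)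
  also have "r div b = 0" using assms(3) by (auto intro: div_poly_less)
  finally show ?thesis using assms(1) by simp
qed

lemma Xp_plus_1: "Xp + 1 = X1" by (simp add: Xp_def X1_def one_pCons)
lemma one_plus_X1: "1 + X1 = Xp" by (simp add: Xp_def X1_def one_pCons)

lemma X1_dvd_iff: "X1 dvd p \<longleftrightarrow> poly p 1 = 0"
  using poly_eq_0_iff_dvd[of p 1] by (simp add: X1_def)

definition Tp :: "bit poly \<Rightarrow> bit poly" where
  "Tp P = (if poly P 1 = 0 then P div X1 else (Xp * P) div X1)"

lemma Tp_even: "poly P 1 = 0 \<Longrightarrow> X1 * Tp P = P"
  unfolding Tp_def using X1_dvd_iff[of P] by (simp add: dvd_mult_div_cancel)

lemma Tp_odd: "poly P 1 = 1 \<Longrightarrow> X1 * Tp P = Xp * P + 1"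
proof -
  assume h: "poly P 1 = 1"
  have "poly (Xp * P + 1) 1 = 0" using h by simp
  hence d: "X1 dvd (Xp*P + 1)" using X1_dvd_iff by blast
  have "(Xp * P) div X1 = (Xp*P + 1) div X1"
  proof -
    have "(1::bit poly) div X1 = 0" by (rule div_poly_less) simp
    thus ?thesis by (simp add: poly_div_add_left)
  qed
  thus ?thesis unfolding Tp_def using h d by (simp add: dvd_mult_div_cancel)
qed

lemma Tp_0[simp]: "Tp 0 = 0" by (simp add: Tp_def)
lemma Tp_1[simp]: "Tp 1 = 1"
proof -
  have "X1 * Tp 1 = X1 * 1" using Tp_odd[of 1] by (simp add: Xp_plus_1)
  thus ?thesis by (simp only: mult_cancel_left) simp
qed

lemma Tp_nz: assumes "P \<noteq> 0" shows "Tp P \<noteq> 0"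
proof
  assume z: "Tp P = 0"
  show False
  proof (cases "poly P 1 = 0")
    case True then show False using Tp_even[of P] z assms by simp
  next
    case False
    hence "poly P 1 = 1" by simp
    from Tp_odd[OF this] z have "Xp * P + 1 = 0" by simp
    hence "poly (Xp * P + 1) 0 = 0" by simp
    thus False by simp
  qed
qed


lemma funpow_apply_add: "(f ^^ i) ((f ^^ k) x) = (f ^^ (i + k)) x"
  by (simp add: funpow_add)

lemma Tp_eq: "X1 * Tp P = Xp ^ (if poly P 1 = 0 then 0 else 1) * P + (if poly P 1 = 0 then 0 else 1)"
  using Tp_even[of P] Tp_odd[of P] bit_cases2[of "poly P 1"] by auto

lemma Tp_div: "Tp P = (Xp ^ (if poly P 1 = 0 then 0 else 1) * P) div X1"
  by (simp add: Tp_def)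

lemma GD:
  fixes q c d :: "bit poly"
  assumes c: "c \<noteq> 0" and d: "d \<noteq> 0" and a: "a \<le> degree d"
  shows "(Xp ^ a * (q div c)) div d = (Xp ^ a * q) div (c * d)"
proof -
  define u where "u = q div c"
  define r where "r = q mod c"
  define u' where "u' = (Xp ^ a * u) div d"
  define r' where "r' = (Xp ^ a * u) mod d"
  have q: "q = c * u + r" by (simp add: u_def r_def)
  have u: "Xp ^ a * u = d * u' + r'" by (simp add: u'_def r'_def)
  have r: "r = 0 \<or> degree r < degree c" using degree_mod_less[OF c] r_def by auto
  have r': "r' = 0 \<or> degree r' < degree d" using degree_mod_less[OF d] r'_def by auto
  have "Xp ^ a * q = c * (Xp ^ a * u) + Xp ^ a * r" by (simp add: q algebra_simps)
  also have "\<dots> = c * (d * u' + r') + Xp ^ a * r" by (simp only: u)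
  finally have eq: "Xp ^ a * q = (c * d) * u' + (c * r' + Xp ^ a * r)"
    by (simp add: algebra_simps)
  have deg1: "c * r' = 0 \<or> degree (c * r') < degree (c * d)"
    using r' c d by (cases "r' = 0") (auto simp: degree_mult_eq)
  have deg2: "Xp ^ a * r = 0 \<or> degree (Xp ^ a * r) < degree (c * d)"
  proof (cases "r = 0")
    case False
    hence "degree (Xp ^ a * r) = a + degree r" by (simp add: degree_mult_eq degree_power_eq)
    thus ?thesis using r False a c d by (auto simp: degree_mult_eq)
  qed simp
  have "c * r' + Xp ^ a * r = 0 \<or> degree (c * r' + Xp ^ a * r) < degree (c * d)"
  proof (cases "c * r' + Xp ^ a * r = 0")
    case False
    have "degree (c * r' + Xp ^ a * r) \<le> max (degree (c*r')) (degree (Xp ^ a * r))"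
      by (rule degree_add_le_max)
    moreover have "0 < degree (c * d) \<or> (c * r' = 0 \<and> Xp ^ a * r = 0)"
      using deg1 deg2 by auto
    ultimately show ?thesis using deg1 deg2 False by auto
  qed simp
  hence "(Xp ^ a * q) div (c * d) = u'"
    using eq c d by (intro div_unique_poly) auto
  thus ?thesis by (simp add: u'_def u_def)
qed

fun odc :: "bit poly \<Rightarrow> nat \<Rightarrow> nat" where
  "odc P 0 = 0"
| "odc P (Suc k) = odc P k + (if poly ((Tp ^^ k) P) 1 = 0 then 0 else 1)"

fun evc :: "bit poly \<Rightarrow> nat \<Rightarrow> nat" where
  "evc P 0 = 0"
| "evc P (Suc k) = evc P k + (if poly ((Tp ^^ k) P) 1 = 0 then 1 else 0)"

lemma evc_odc: "evc P k + odc P k = k"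
  by (induction k) auto

lemma evc_mono: "k \<le> k' \<Longrightarrow> evc P k \<le> evc P k'"
proof (induction k' arbitrary: k)
  case 0 then show ?case by simp
next
  case (Suc k') then show ?case by (cases "k = Suc k'") (auto simp: le_Suc_eq)
qed

lemma evc_le: "evc P k \<le> k" using evc_odc[of P k] by arith

lemma Tp_iter: "(Tp ^^ k) P = (Xp ^ odc P k * P) div X1 ^ k"
proof (induction k)
  case 0 then show ?case by simp
next
  case (Suc k)
  define QQ where "QQ = (Tp ^^ k) P"
  define e where "e = (if poly QQ 1 = 0 then 0 else (1::nat))"
  have "(Tp ^^ Suc k) P = Tp QQ" by (simp add: QQ_def)
  also have "\<dots> = (Xp ^ e * QQ) div X1" by (simp add: Tp_div e_def)
  also have "\<dots> = (Xp ^ e * ((Xp ^ odc P k * P) div X1 ^ k)) div X1"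
    using Suc by (simp add: QQ_def)
  also have "\<dots> = (Xp ^ e * (Xp ^ odc P k * P)) div (X1 ^ k * X1)"
    by (rule GD) (auto simp: e_def)
  also have "\<dots> = (Xp ^ odc P (Suc k) * P) div X1 ^ Suc k"
    by (simp add: e_def QQ_def power_add mult.assoc mult.commute)
  finally show ?case .
qed

lemma Tp_degree_even:
  assumes "P \<noteq> 0" "poly P 1 = 0"
  shows "degree (Tp P) + 1 = degree P"
proof -
  have "degree P = degree (X1 * Tp P)" using Tp_even[OF assms(2)] by simp
  also have "\<dots> = 1 + degree (Tp P)" using Tp_nz[OF assms(1)] by (simp add: degree_mult_eq)
  finally show ?thesis by simp
qed

lemma Tp_degree_odd:
  assumes "P \<noteq> 0" "poly P 1 = 1"
  shows "degree (Tp P) = degree P"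
proof -
  have "degree (Xp * P) = 1 + degree P" using assms(1) by (simp add: degree_mult_eq)
  hence "degree (Xp * P + 1) = 1 + degree P" by (subst degree_add_eq_left) auto
  moreover have "degree (Xp * P + 1) = 1 + degree (Tp P)"
    using Tp_odd[OF assms(2)] Tp_nz[OF assms(1)] by (metis X1_nz degree_mult_eq degree_X1)
  ultimately show ?thesis by simp
qed

lemma even_deg_pos: assumes "P \<noteq> 0" "poly P 1 = 0" shows "degree P \<ge> 1"
proof (rule ccontr)
  assume "\<not> degree P \<ge> 1"
  hence "degree P = 0" by simp
  then obtain c where "P = [:c:]" by (metis degree_eq_zeroE)
  with assms show False by simp
qed

lemma Tp_iter_nz: "P \<noteq> 0 \<Longrightarrow> (Tp ^^ k) P \<noteq> 0"
  by (induction k) (auto simp: Tp_nz)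

lemma deg_evc: assumes "P \<noteq> 0" shows "degree ((Tp ^^ k) P) + evc P k = degree P"
proof (induction k)
  case 0 then show ?case by simp
next
  case (Suc k)
  define QQ where "QQ = (Tp ^^ k) P"
  have QQnz: "QQ \<noteq> 0" using Tp_iter_nz[OF assms] by (simp add: QQ_def)
  show ?case
  proof (cases "poly QQ 1 = 0")
    case True
    then show ?thesis using Suc Tp_degree_even[OF QQnz True] by (simp add: QQ_def)
  next
    case False
    hence "poly QQ 1 = 1" by simp
    then show ?thesis using Suc Tp_degree_odd[OF QQnz] False by (simp add: QQ_def)
  qed
qed

lemma deg0_is_1: assumes "(P::bit poly) \<noteq> 0" "degree P = 0" shows "P = 1"
proof -
  obtain c where "P = [:c:]" using assms(2) by (metis degree_eq_zeroE)
  with assms(1) show ?thesis by (simp add: one_pCons)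
qed

lemma odd_run:
  assumes "\<forall>i<a. poly ((Tp ^^ i) P) 1 = 1"
  shows "X1 ^ a * ((Tp ^^ a) P + 1) = Xp ^ a * (P + 1)"
  using assms
proof (induction a)
  case 0 then show ?case by simp
next
  case (Suc a)
  define QQ where "QQ = (Tp ^^ a) P"
  have IH: "X1 ^ a * (QQ + 1) = Xp ^ a * (P + 1)" using Suc by (simp add: QQ_def)
  have odd: "poly QQ 1 = 1" using Suc.prems by (simp add: QQ_def)
  have "X1 * (Tp QQ + 1) = Xp * QQ + 1 + X1" using Tp_odd[OF odd] by (simp add: algebra_simps)
  also have "\<dots> = Xp * (QQ + 1)" by (simp add: algebra_simps flip: one_plus_X1)
  finally have "X1 * (Tp QQ + 1) = Xp * (QQ + 1)" .
  hence "X1 ^ Suc a * (Tp QQ + 1) = X1 ^ a * (Xp * (QQ + 1))" by (simp add: mult.assoc)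
  also have "\<dots> = Xp * (X1 ^ a * (QQ + 1))" by (simp add: algebra_simps)
  also have "\<dots> = Xp ^ Suc a * (P + 1)" using IH by simp
  finally show ?case by (simp add: QQ_def)
qed

lemma X1_pow_dvd_Xp: "X1 ^ k dvd Xp ^ a * QQ \<Longrightarrow> X1 ^ k dvd QQ"
proof (induction k arbitrary: QQ)
  case 0 then show ?case by simp
next
  case (Suc k)
  have "X1 dvd Xp ^ a * QQ" using Suc.prems by (metis dvd_mult_left power_Suc)
  hence "poly (Xp ^ a * QQ) 1 = 0" using X1_dvd_iff by blast
  hence "poly QQ 1 = 0" by simp
  then obtain QQ' where QQ': "QQ = X1 * QQ'" using X1_dvd_iff by (metis dvdE)
  have "X1 * X1 ^ k dvd X1 * (Xp ^ a * QQ')" using Suc.prems by (simp add: QQ' algebra_simps)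
  hence "X1 ^ k dvd Xp ^ a * QQ'" using X1_nz by (meson dvd_mult_cancel_left)
  hence "X1 ^ k dvd QQ'" by (rule Suc.IH)
  thus ?case by (simp add: QQ')
qed

lemma exists_even_step:
  assumes "P \<noteq> 0" "P \<noteq> 1"
  shows "\<exists>i\<le>degree P. poly ((Tp ^^ i) P) 1 = 0"
proof (rule ccontr)
  assume "\<not> ?thesis"
  hence all: "\<forall>i<Suc (degree P). poly ((Tp ^^ i) P) 1 = 1" by auto
  have "X1 ^ Suc (degree P) dvd Xp ^ Suc (degree P) * (P + 1)"
    using odd_run[OF all] by (metis dvd_triv_left)
  hence dv: "X1 ^ Suc (degree P) dvd (P + 1)"
    by (rule X1_pow_dvd_Xp)
  have nz1: "P + 1 \<noteq> 0" using assms(2) by (metis add_diff_cancel_right' bpoly_diff bpoly_add_self)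
  have "degree (X1 ^ Suc (degree P)) \<le> degree (P + 1)" using dvd_imp_degree_le[OF dv nz1] .
  moreover have "degree (P + 1) \<le> degree P" using degree_add_le_max[of P 1] by simp
  ultimately show False using degree_X1_pow[of "Suc (degree P)"] by linarith
qed

lemma reach_evc:
  assumes "P \<noteq> 0"
  shows "e \<le> degree P \<Longrightarrow> \<exists>k\<le>e * (degree P + 1). evc P k \<ge> e"
proof (induction e)
  case 0 then show ?case by auto
next
  case (Suc e)
  then obtain k where k: "k \<le> e * (degree P + 1)" "evc P k \<ge> e" by auto
  show ?case
  proof (cases "evc P k \<ge> Suc e")
    case True then show ?thesis using k by (intro exI[of _ k]) auto
  next
    case False
    hence ek: "evc P k = e" using k by simp
    define QQ where "QQ = (Tp ^^ k) P"
    have QQnz: "QQ \<noteq> 0" using Tp_iter_nz[OF assms] by (simp add: QQ_def)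
    have dQ: "degree QQ = degree P - e" using deg_evc[OF assms, of k] ek by (simp add: QQ_def)
    hence "degree QQ \<ge> 1" using Suc.prems by simp
    hence "QQ \<noteq> 1" by auto
    then obtain i where i: "i \<le> degree QQ" "poly ((Tp ^^ i) QQ) 1 = 0"
      using exists_even_step[OF QQnz] by auto
    have "(Tp ^^ i) QQ = (Tp ^^ (k + i)) P" by (simp add: QQ_def funpow_apply_add add.commute)
    hence "evc P (Suc (k + i)) = evc P (k + i) + 1" using i(2) by simp
    moreover have "evc P (k + i) \<ge> e" using evc_mono[of k "k+i" P] ek by simp
    ultimately have "evc P (Suc (k + i)) \<ge> Suc e" by simp
    moreover have "Suc (k + i) \<le> Suc e * (degree P + 1)"
      using k(1) i(1) dQ by (simp add: algebra_simps)
    ultimately show ?thesis by blast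
  qed
qed

lemma reach_one:
  assumes "P \<noteq> 0"
  shows "\<exists>k\<le>(degree P + 1)^2. (Tp ^^ k) P = 1 \<and> evc P k = degree P"
proof -
  obtain k where k: "k \<le> degree P * (degree P + 1)" "evc P k \<ge> degree P"
    using reach_evc[OF assms, of "degree P"] by auto
  have d: "degree ((Tp ^^ k) P) + evc P k = degree P" by (rule deg_evc[OF assms])
  hence "degree ((Tp ^^ k) P) = 0" "evc P k = degree P" using k(2) by auto
  hence "(Tp ^^ k) P = 1" using deg0_is_1 Tp_iter_nz[OF assms] by blast
  moreover have "k \<le> (degree P + 1)^2" using k(1) by (simp add: power2_eq_square algebra_simps)
  ultimately show ?thesis using \<open>evc P k = degree P\<close> by blast
qed

definition tp :: "bit poly \<Rightarrow> nat" where
  "tp P = (LEAST k. (Tp ^^ k) P = 1)"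

lemma tp_props:
  assumes "P \<noteq> 0"
  shows "(Tp ^^ tp P) P = 1" "tp P \<le> (degree P + 1)^2"
proof -
  obtain k where k: "k \<le> (degree P + 1)^2" "(Tp ^^ k) P = 1" using reach_one[OF assms] by auto
  show "(Tp ^^ tp P) P = 1" unfolding tp_def by (rule LeastI[of _ k]) (use k in auto)
  have "tp P \<le> k" unfolding tp_def by (rule Least_le) (use k in auto)
  thus "tp P \<le> (degree P + 1)^2" using k by simp
qed

lemma tp_le: "(Tp ^^ k) P = 1 \<Longrightarrow> tp P \<le> k"
  unfolding tp_def by (rule Least_le)

lemma Tp_iter_1: "(Tp ^^ k) 1 = 1" by (induction k) auto

lemma tp_shift:
  assumes P: "P \<noteq> 0" and nz: "\<forall>i<k. (Tp ^^ i) P \<noteq> 1"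
  shows "tp P = k + tp ((Tp ^^ k) P)"
proof -
  define QQ where "QQ = (Tp ^^ k) P"
  have QQnz: "QQ \<noteq> 0" using Tp_iter_nz[OF P] by (simp add: QQ_def)
  have "(Tp ^^ (k + tp QQ)) P = 1" using tp_props(1)[OF QQnz]
    by (simp add: QQ_def funpow_apply_add add.commute)
  hence le: "tp P \<le> k + tp QQ" by (rule tp_le)
  have t1: "(Tp ^^ tp P) P = 1" by (rule tp_props(1)[OF P])
  hence "tp P \<ge> k" using nz by (meson not_le)
  then obtain t where t: "tp P = k + t" by (metis le_add_diff_inverse)
  have "(Tp ^^ t) QQ = 1" using t1 t by (simp add: QQ_def funpow_apply_add add.commute)
  hence "tp QQ \<le> t" by (rule tp_le)
  thus ?thesis using le t by (simp add: QQ_def)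
qed


lemma evc_Suc_le: "evc P (Suc k) \<le> evc P k + 1" by simp

lemma evc_hit: "evc P k \<ge> j \<Longrightarrow> \<exists>k'\<le>k. evc P k' = j"
proof (induction k)
  case 0 then show ?case by (intro exI[of _ 0]) auto
next
  case (Suc k)
  show ?case
  proof (cases "evc P k \<ge> j")
    case True then show ?thesis using Suc.IH by (meson le_Suc_eq)
  next
    case False
    hence "evc P (Suc k) = j" using Suc.prems evc_Suc_le[of P k] by linarith
    thus ?thesis by blast
  qed
qed

definition tj :: "bit poly \<Rightarrow> nat \<Rightarrow> nat" where
  "tj P j = (LEAST k. evc P k = j)"

lemma tj_exists: assumes "P \<noteq> 0" "j \<le> degree P" shows "\<exists>k. evc P k = j"
proof -
  obtain k where "evc P k = degree P" using reach_one[OF assms(1)] by auto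
  thus ?thesis using evc_hit[of j P k] assms(2) by auto
qed

lemma tj_evc: assumes "P \<noteq> 0" "j \<le> degree P" shows "evc P (tj P j) = j"
  unfolding tj_def using tj_exists[OF assms] by (rule LeastI_ex)

lemma tj_gt_iff: assumes "P \<noteq> 0" "j \<le> degree P" shows "tj P j > M \<longleftrightarrow> evc P M < j"
proof
  assume "tj P j > M"
  show "evc P M < j"
  proof (rule ccontr)
    assume "\<not> evc P M < j"
    then obtain k' where "k' \<le> M" "evc P k' = j" using evc_hit[of j P M] by auto
    hence "tj P j \<le> k'" unfolding tj_def by (intro Least_le)
    thus False using \<open>tj P j > M\<close> \<open>k' \<le> M\<close> by simp
  qed
next
  assume h: "evc P M < j"
  show "tj P j > M"
  proof (rule ccontr)
    assume "\<not> tj P j > M"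
    hence "evc P (tj P j) \<le> evc P M" by (intro evc_mono) simp
    thus False using tj_evc[OF assms] h by simp
  qed
qed

lemma tj_ge: assumes "P \<noteq> 0" "j \<le> degree P" shows "j \<le> tj P j"
  using tj_evc[OF assms] evc_le[of P "tj P j"] by simp

definition sg :: "nat \<Rightarrow> bit poly \<Rightarrow> bit poly" where
  "sg s A = (Xp ^ s * A) div X1 ^ s"

lemma sg_0[simp]: "sg 0 A = A" by (simp add: sg_def)

lemma deg_lt_or_0_mod: "D \<noteq> 0 \<Longrightarrow> (P::bit poly) mod D = 0 \<or> degree (P mod D) < degree D"
  using degree_mod_less by blast

lemma Tp_at_tj:
  assumes P: "P \<noteq> 0" and j: "j \<le> degree P"
  shows "(Tp ^^ tj P j) P = sg (tj P j) (P div Xp ^ j)"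
proof -
  define k where "k = tj P j"
  define A where "A = P div Xp ^ j"
  define W where "W = P mod Xp ^ j"
  have kj: "j \<le> k" using tj_ge[OF P j] by (simp add: k_def)
  have od: "odc P k = k - j" using tj_evc[OF P j] evc_odc[of P k] by (simp add: k_def)
  have PA: "P = Xp ^ j * A + W" by (simp add: A_def W_def)
  have W: "W = 0 \<or> degree W < j"
    using deg_lt_or_0_mod[of "Xp ^ j" P] by (simp add: W_def)
  have "Xp ^ (k - j) * P = Xp ^ k * A + Xp ^ (k - j) * W"
    using kj by (simp add: PA algebra_simps flip: power_add)
  hence "(Xp ^ (k - j) * P) div X1 ^ k = (Xp ^ k * A) div X1 ^ k + (Xp ^ (k - j) * W) div X1 ^ k"
    by (simp add: poly_div_add_left)
  also have "(Xp ^ (k - j) * W) div X1 ^ k = 0"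
  proof (cases "W = 0")
    case False
    hence "degree (Xp ^ (k - j) * W) = (k - j) + degree W" by (simp add: degree_mult_eq)
    hence "degree (Xp ^ (k - j) * W) < degree (X1 ^ k)" using W False kj by simp
    thus ?thesis by (rule div_poly_less)
  qed simp
  finally show ?thesis using Tp_iter[of k P] od by (simp add: k_def A_def sg_def)
qed

lemma tp_split:
  assumes P: "P \<noteq> 0" and j: "j \<le> degree P"
  shows "tp P = tj P j + tp (sg (tj P j) (P div Xp ^ j))"
proof -
  have "\<forall>i<tj P j. (Tp ^^ i) P \<noteq> 1"
  proof (intro allI impI)
    fix i assume "i < tj P j"
    hence "evc P i < j" using tj_gt_iff[OF P j] by simp
    hence "degree ((Tp ^^ i) P) \<ge> 1" using deg_evc[OF P, of i] j by simp
    thus "(Tp ^^ i) P \<noteq> 1" by auto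
  qed
  from tp_shift[OF P this] show ?thesis using Tp_at_tj[OF P j] by simp
qed

lemma deg_div_le:
  fixes a b :: "bit poly"
  assumes b: "b \<noteq> 0"
  shows "degree (a div b) \<le> degree a - degree b"
proof (cases "a div b = 0")
  case False
  have r: "a mod b = 0 \<or> degree (a mod b) < degree b" by (rule deg_lt_or_0_mod[OF b])
  have a: "a = b * (a div b) + a mod b" by simp
  have d1: "degree (b * (a div b)) = degree b + degree (a div b)" using b False by (simp add: degree_mult_eq)
  have "degree a = degree (b * (a div b))"
  proof (cases "a mod b = 0")
    case True then show ?thesis by (subst a) simp
  next
    case False
    hence "degree (a mod b) < degree (b * (a div b))" using r d1 by simp
    thus ?thesis by (subst a) (rule degree_add_eq_left)
  qed
  thus ?thesis using d1 by simp
qed simp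

lemma sg_add: "sg a (sg b A) = sg (a + b) A"
proof -
  have "sg a (sg b A) = (Xp ^ a * ((Xp ^ b * A) div X1 ^ b)) div X1 ^ a" by (simp add: sg_def)
  also have "\<dots> = (Xp ^ a * (Xp ^ b * A)) div (X1 ^ b * X1 ^ a)" by (rule GD) auto
  also have "\<dots> = sg (a + b) A" by (simp add: sg_def power_add mult_ac)
  finally show ?thesis .
qed

lemma sg_decomp: "Xp ^ s * A = X1 ^ s * sg s A + (Xp ^ s * A) mod X1 ^ s"
  by (simp add: sg_def)

lemma sg_inj: assumes "sg s A = sg s B" shows "A = B"
proof (rule ccontr)
  assume ne: "A \<noteq> B"
  define rA where "rA = (Xp ^ s * A) mod X1 ^ s"
  define rB where "rB = (Xp ^ s * B) mod X1 ^ s"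
  have eA: "Xp ^ s * A = X1 ^ s * sg s B + rA" using sg_decomp[of s A] assms by (simp add: rA_def)
  have eB: "Xp ^ s * B = X1 ^ s * sg s B + rB" using sg_decomp[of s B] by (simp add: rB_def)
  have "Xp ^ s * A + Xp ^ s * B = (X1 ^ s * sg s B + X1 ^ s * sg s B) + (rA + rB)"
    by (subst eA, subst eB) (simp only: add_ac)
  also have "\<dots> = rA + rB" by simp
  finally have "Xp ^ s * A + Xp ^ s * B = rA + rB" .
  hence eq: "Xp ^ s * (A + B) = rA + rB" by (simp add: algebra_simps)
  have AB: "A + B \<noteq> 0" using ne by (metis add_diff_cancel_right' bpoly_diff bpoly_add_self add.commute)
  have "degree (Xp ^ s * (A + B)) \<ge> s" using AB by (simp add: degree_mult_eq)
  moreover have "rA + rB = 0 \<or> degree (rA + rB) < s"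
  proof -
    have "rA = 0 \<or> degree rA < s" using deg_lt_or_0_mod[of "X1 ^ s" "Xp ^ s * A"] by (simp add: rA_def)
    moreover have "rB = 0 \<or> degree rB < s" using deg_lt_or_0_mod[of "X1 ^ s" "Xp ^ s * B"] by (simp add: rB_def)
    ultimately show ?thesis using degree_add_le_max[of rA rB] by (cases "rA + rB = 0") auto
  qed
  moreover have "Xp ^ s * (A + B) \<noteq> 0" using AB by simp
  ultimately show False using eq by auto
qed

lemma sg_nz_deg:
  assumes A: "A \<noteq> 0"
  shows "sg s A \<noteq> 0" "degree (sg s A) = degree A"
proof -
  define r where "r = (Xp ^ s * A) mod X1 ^ s"
  have eq: "Xp ^ s * A = X1 ^ s * sg s A + r" by (simp add: sg_def r_def)
  have r: "r = 0 \<or> degree r < s" using deg_lt_or_0_mod[of "X1 ^ s" "Xp ^ s * A"] by (simp add: r_def)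
  have dA: "degree (Xp ^ s * A) = s + degree A" using A by (simp add: degree_mult_eq)
  show nz: "sg s A \<noteq> 0"
  proof
    assume "sg s A = 0"
    hence "Xp ^ s * A = r" using eq by simp
    thus False using r dA A by auto
  qed
  have d2: "degree (X1 ^ s * sg s A) = s + degree (sg s A)" using nz by (simp add: degree_mult_eq)
  have "degree (Xp ^ s * A) = degree (X1 ^ s * sg s A)"
  proof (cases "r = 0")
    case True then show ?thesis using eq by simp
  next
    case False
    hence "degree r < degree (X1 ^ s * sg s A)" using r d2 by simp
    thus ?thesis using eq by (simp add: degree_add_eq_left)
  qed
  thus "degree (sg s A) = degree A" using dA d2 by simp
qed

lemma sg_div: "(sg s A) div Xp ^ j = sg s (A div Xp ^ j)"
proof -
  define A' where "A' = A div Xp ^ j"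
  define W where "W = A mod Xp ^ j"
  define r' where "r' = (Xp ^ s * A') mod X1 ^ s"
  define E where "E = Xp ^ j * r' + Xp ^ s * W"
  have W: "W = 0 \<or> degree W < j" using deg_lt_or_0_mod[of "Xp ^ j" A] by (simp add: W_def)
  have r': "r' = 0 \<or> degree r' < s" using deg_lt_or_0_mod[of "X1 ^ s" "Xp ^ s * A'"] by (simp add: r'_def)
  have AA: "A = Xp ^ j * A' + W" by (simp add: A'_def W_def)
  have "Xp ^ s * A = Xp ^ j * (Xp ^ s * A') + Xp ^ s * W" by (simp add: AA algebra_simps)
  also have "Xp ^ s * A' = X1 ^ s * sg s A' + r'" by (simp add: sg_def r'_def)
  finally have eq: "Xp ^ s * A = X1 ^ s * (Xp ^ j * sg s A') + E" by (simp add: E_def algebra_simps)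
  have "sg s A = Xp ^ j * sg s A' + E div X1 ^ s"
    by (simp add: sg_def eq poly_div_add_left)
  moreover have "E div X1 ^ s = 0 \<or> degree (E div X1 ^ s) < j"
  proof (cases "E = 0")
    case False
    have e1: "Xp ^ j * r' = 0 \<or> degree (Xp ^ j * r') < j + s"
      using r' by (cases "r' = 0") (auto simp: degree_mult_eq)
    have e2: "Xp ^ s * W = 0 \<or> degree (Xp ^ s * W) < j + s"
      using W by (cases "W = 0") (auto simp: degree_mult_eq)
    have "degree E < j + s" using e1 e2 False degree_add_le_max[of "Xp ^ j * r'" "Xp ^ s * W"]
      unfolding E_def by auto
    show ?thesis
    proof (cases "degree E < degree (X1 ^ s)")
      case True then show ?thesis by (simp add: div_poly_less)
    next
      case False
      then show ?thesis using deg_div_le[of "X1 ^ s" E] \<open>degree E < j + s\<close>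
        by (intro disjI2) simp
    qed
  qed simp
  ultimately show ?thesis
    by (intro div_unique_poly) (auto simp: A'_def)
qed


lemma UNIV_bit: "(UNIV :: bit set) = {0, 1}" using bit_cases2 by auto
lemma finite_UNIV_bit[simp]: "finite (UNIV :: bit set)" by (simp add: UNIV_bit)
lemma card_UNIV_bit: "card (UNIV :: bit set) = 2" by (simp add: UNIV_bit)

definition lowp :: "nat \<Rightarrow> bit poly set" where "lowp k = {P. \<forall>i\<ge>k. coeff P i = 0}"
definition Pn :: "nat \<Rightarrow> bit poly set" where "Pn n = {P. P \<noteq> 0 \<and> degree P = n}"

lemma lowp_iff: "P \<in> lowp k \<longleftrightarrow> P = 0 \<or> degree P < k"
proof
  assume h: "P \<in> lowp k"
  show "P = 0 \<or> degree P < k"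
  proof (rule ccontr)
    assume "\<not> (P = 0 \<or> degree P < k)"
    hence "P \<noteq> 0" "degree P \<ge> k" by auto
    hence "coeff P (degree P) = 0" using h by (simp add: lowp_def)
    thus False using \<open>P \<noteq> 0\<close> by simp
  qed
next
  assume "P = 0 \<or> degree P < k"
  thus "P \<in> lowp k" by (auto simp: lowp_def intro: coeff_eq_0)
qed

lemma lowp_0: "lowp 0 = {0}" by (auto simp: lowp_iff)

lemma lowp_Suc: "lowp (Suc k) = (\<lambda>(a, p). pCons a p) ` (UNIV \<times> lowp k)"
proof -
  have *: "P \<in> lowp (Suc k) \<longleftrightarrow> (\<exists>a QQ. P = pCons a QQ \<and> QQ \<in> lowp k)" for P
    by (cases P) (auto simp: lowp_iff degree_pCons_eq_if split: if_splits)
  show ?thesis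
  proof (rule set_eqI, rule iffI)
    fix P assume "P \<in> lowp (Suc k)"
    then obtain a QQ where aQ: "P = pCons a QQ" "QQ \<in> lowp k" using * by blast
    thus "P \<in> (\<lambda>(a, p). pCons a p) ` (UNIV \<times> lowp k)" by (intro image_eqI[of _ _ "(a, QQ)"]) auto
  next
    fix P assume "P \<in> (\<lambda>(a, p). pCons a p) ` (UNIV \<times> lowp k)"
    then obtain a QQ where "P = pCons a QQ" "QQ \<in> lowp k" by auto
    thus "P \<in> lowp (Suc k)" using * by blast
  qed
qed

lemma finite_card_lowp: "finite (lowp k) \<and> card (lowp k) = 2 ^ k"
proof (induction k)
  case 0 then show ?case by (simp add: lowp_0)
next
  case (Suc k)
  have inj: "inj_on (\<lambda>(a, p). pCons a p) ((UNIV :: bit set) \<times> lowp k)"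
    by (auto simp: inj_on_def)
  have "card (lowp (Suc k)) = card ((UNIV :: bit set) \<times> lowp k)"
    unfolding lowp_Suc using card_image[OF inj] by simp
  also have "\<dots> = 2 * 2 ^ k" using Suc by (simp add: card_cartesian_product card_UNIV_bit)
  finally show ?case using Suc by (simp add: lowp_Suc)
qed

lemma finite_lowp[simp]: "finite (lowp k)" using finite_card_lowp by blast
lemma card_lowp: "card (lowp k) = 2 ^ k" using finite_card_lowp by blast

lemma Pn_eq: "Pn n = lowp (Suc n) - lowp n"
  by (auto simp: Pn_def lowp_iff)

lemma finite_Pn[simp]: "finite (Pn n)" by (simp add: Pn_eq)

lemma card_Pn: "card (Pn n) = 2 ^ n"
proof -
  have sub: "lowp n \<subseteq> lowp (Suc n)" by (auto simp: lowp_iff)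
  have "card (Pn n) = card (lowp (Suc n)) - card (lowp n)"
    unfolding Pn_eq by (rule card_Diff_subset) (use sub in auto)
  thus ?thesis by (simp add: card_lowp)
qed

lemma Pn_nz: "P \<in> Pn n \<Longrightarrow> P \<noteq> 0" by (simp add: Pn_def)
lemma Pn_deg: "P \<in> Pn n \<Longrightarrow> degree P = n" by (simp add: Pn_def)

lemma divmod_bij:
  assumes D: "D \<noteq> 0" "degree D = M" "M \<le> n"
  shows "bij_betw (\<lambda>P. (P div D, P mod D)) (Pn n) (Pn (n - M) \<times> lowp M)"
proof (rule bij_betw_byWitness[where f' = "\<lambda>(q, r). D * q + r"])
  show "\<forall>a\<in>Pn n. (case (a div D, a mod D) of (q, r) \<Rightarrow> D * q + r) = a" by simp
  show "\<forall>a'\<in>Pn (n - M) \<times> lowp M. (\<lambda>P. (P div D, P mod D)) (case a' of (q, r) \<Rightarrow> D * q + r) = a'"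
  proof
    fix x assume x: "x \<in> Pn (n - M) \<times> lowp M"
    obtain q r where qr: "x = (q, r)" by (cases x)
    have r: "r = 0 \<or> degree r < degree D" using x qr D by (simp add: lowp_iff)
    have "(D * q + r) div D = q" using D r by (intro div_unique_poly) auto
    moreover have "(D * q + r) mod D = r"
    proof -
      have "(D * q + r) mod D = r mod D" by (simp add: poly_mod_add_left)
      also have "\<dots> = r" using r by (auto intro: mod_poly_less)
      finally show ?thesis .
    qed
    ultimately show "(\<lambda>P. (P div D, P mod D)) (case x of (q, r) \<Rightarrow> D * q + r) = x" by (simp add: qr)
  qed
  show "(\<lambda>P. (P div D, P mod D)) ` Pn n \<subseteq> Pn (n - M) \<times> lowp M"
  proof
    fix y assume "y \<in> (\<lambda>P. (P div D, P mod D)) ` Pn n"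
    then obtain P where P: "P \<in> Pn n" "y = (P div D, P mod D)" by auto
    define q where "q = P div D"
    define r where "r = P mod D"
    have eq: "P = D * q + r" by (simp add: q_def r_def)
    have r: "r = 0 \<or> degree r < M" using deg_lt_or_0_mod[OF D(1), of P] D by (simp add: r_def)
    have Pnz: "P \<noteq> 0" and dP: "degree P = n" using P by (auto simp: Pn_def)
    have qnz: "q \<noteq> 0"
    proof
      assume "q = 0"
      hence "P = r" using eq by simp
      thus False using r Pnz dP D by auto
    qed
    have dq: "degree (D * q) = M + degree q" using qnz D by (simp add: degree_mult_eq)
    have "degree P = degree (D * q)"
    proof (cases "r = 0")
      case True then show ?thesis using eq by simp
    next
      case False
      hence "degree r < degree (D * q)" using r dq by simp
      thus ?thesis using eq by (simp add: degree_add_eq_left)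
    qed
    hence "degree q = n - M" using dP dq by simp
    thus "y \<in> Pn (n - M) \<times> lowp M" using P(2) qnz r by (simp add: Pn_def lowp_iff q_def r_def)
  qed
  show "(\<lambda>(q, r). D * q + r) ` (Pn (n - M) \<times> lowp M) \<subseteq> Pn n"
  proof
    fix y assume "y \<in> (\<lambda>(q, r). D * q + r) ` (Pn (n - M) \<times> lowp M)"
    then obtain q r where qr: "q \<in> Pn (n - M)" "r \<in> lowp M" "y = D * q + r" by auto
    have dq: "degree (D * q) = n" using qr D by (simp add: Pn_def degree_mult_eq)
    have r: "r = 0 \<or> degree r < M" using qr by (simp add: lowp_iff)
    have "degree y = n"
    proof (cases "r = 0")
      case True then show ?thesis using qr dq by simp
    next
      case False
      hence "degree r < degree (D * q)" using r dq D by simp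
      thus ?thesis using qr dq by (simp add: degree_add_eq_left)
    qed
    moreover have "y \<noteq> 0"
    proof
      assume "y = 0"
      hence "D * q = r" using qr by (metis add_diff_cancel_right' bpoly_diff add_0)
      thus False using dq r D qr(1) by (auto simp: Pn_def)
    qed
    ultimately show "y \<in> Pn n" by (simp add: Pn_def)
  qed
qed

lemma card_div_filter:
  assumes D: "D \<noteq> 0" "degree D = M" "M \<le> n"
  shows "card {P \<in> Pn n. \<phi> (P div D)} = 2 ^ M * card {q \<in> Pn (n - M). \<phi> q}"
proof -
  define f where "f = (\<lambda>P::bit poly. (P div D, P mod D))"
  have inj: "inj_on f (Pn n)" and img: "f ` Pn n = Pn (n - M) \<times> lowp M"
    using divmod_bij[OF D] by (auto simp: bij_betw_def f_def)
  have "f ` {P \<in> Pn n. \<phi> (P div D)} = {y \<in> f ` Pn n. \<phi> (fst y)}" by (auto simp: f_def)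
  also have "\<dots> = {q \<in> Pn (n - M). \<phi> q} \<times> lowp M" using img by auto
  finally have im: "f ` {P \<in> Pn n. \<phi> (P div D)} = {q \<in> Pn (n - M). \<phi> q} \<times> lowp M" .
  have "card {P \<in> Pn n. \<phi> (P div D)} = card ({q \<in> Pn (n - M). \<phi> q} \<times> lowp M)"
    using card_image[OF inj_on_subset[OF inj, of "{P \<in> Pn n. \<phi> (P div D)}"]] im by auto
  thus ?thesis by (simp add: card_cartesian_product card_lowp)
qed

lemma card_mod_filter:
  assumes D: "D \<noteq> 0" "degree D = M" "M \<le> n"
  shows "card {P \<in> Pn n. \<psi> (P mod D)} = 2 ^ (n - M) * card {r \<in> lowp M. \<psi> r}"
proof -
  define f where "f = (\<lambda>P::bit poly. (P div D, P mod D))"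
  have inj: "inj_on f (Pn n)" and img: "f ` Pn n = Pn (n - M) \<times> lowp M"
    using divmod_bij[OF D] by (auto simp: bij_betw_def f_def)
  have "f ` {P \<in> Pn n. \<psi> (P mod D)} = {y \<in> f ` Pn n. \<psi> (snd y)}" by (auto simp: f_def)
  also have "\<dots> = Pn (n - M) \<times> {r \<in> lowp M. \<psi> r}" using img by auto
  finally have im: "f ` {P \<in> Pn n. \<psi> (P mod D)} = Pn (n - M) \<times> {r \<in> lowp M. \<psi> r}" .
  have "card {P \<in> Pn n. \<psi> (P mod D)} = card (Pn (n - M) \<times> {r \<in> lowp M. \<psi> r})"
    using card_image[OF inj_on_subset[OF inj, of "{P \<in> Pn n. \<psi> (P mod D)}"]] im by auto
  thus ?thesis by (simp add: card_cartesian_product card_Pn)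
qed


definition pv :: "nat \<Rightarrow> bit poly \<Rightarrow> bit list" where
  "pv M P = map (\<lambda>i. poly ((Tp ^^ i) P) 1) [0..<M]"

definition Zc :: "bit list \<Rightarrow> nat" where "Zc v = length (filter (\<lambda>b. b = 0) v)"

lemma pv_Suc: "pv (Suc M) P = poly P 1 # pv M (Tp P)"
proof -
  have "[0..<Suc M] = 0 # map Suc [0..<M]" by (simp add: map_Suc_upt upt_conv_Cons)
  thus ?thesis by (simp add: pv_def funpow_Suc_right funpow_swap1 del: upt_Suc)
qed

lemma pv_snoc: "pv (Suc M) P = pv M P @ [poly ((Tp ^^ M) P) 1]"
  by (simp add: pv_def)

lemma length_pv[simp]: "length (pv M P) = M" by (simp add: pv_def)

lemma evc_pv: "evc P M = Zc (pv M P)"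
  by (induction M) (auto simp: pv_snoc Zc_def pv_def)

lemma Tp_sum:
  assumes "poly P 1 = poly P' 1"
  shows "X1 * (Tp P + Tp P') = Xp ^ (if poly P 1 = 0 then 0 else 1) * (P + P')"
proof -
  define e where "e = (if poly P 1 = 0 then 0 else 1::nat)"
  define c where "c = (if poly P 1 = 0 then 0 else 1::bit poly)"
  have a: "X1 * Tp P = Xp ^ e * P + c" using Tp_eq[of P] by (simp add: e_def c_def)
  have b: "X1 * Tp P' = Xp ^ e * P' + c" using Tp_eq[of P'] assms by (simp add: e_def c_def)
  have "X1 * (Tp P + Tp P') = (Xp ^ e * P + Xp ^ e * P') + (c + c)"
    by (simp only: distrib_left a b add_ac)
  also have "\<dots> = Xp ^ e * (P + P')" by (simp add: distrib_left)
  finally show ?thesis by (simp add: e_def)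
qed

lemma bit_sum0: "(a::bit) + b = 0 \<Longrightarrow> a = b"
  by (cases a; cases b) auto

lemma pv_congr: "X1 ^ M dvd (P + P') \<Longrightarrow> pv M P = pv M P'"
proof (induction M arbitrary: P P')
  case 0 then show ?case by (simp add: pv_def)
next
  case (Suc M)
  have "X1 dvd P + P'" using Suc.prems by (metis dvd_mult_left power_Suc)
  hence "poly (P + P') 1 = 0" by (simp add: X1_dvd_iff)
  hence "poly P 1 + poly P' 1 = 0" by simp
  hence eq1: "poly P 1 = poly P' 1" by (rule bit_sum0)
  obtain h where h: "P + P' = X1 ^ Suc M * h" using Suc.prems by (auto elim: dvdE)
  have "X1 * (Tp P + Tp P') = Xp ^ (if poly P 1 = 0 then 0 else 1) * (P + P')"
    by (rule Tp_sum[OF eq1])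
  also have "\<dots> = X1 * (Xp ^ (if poly P 1 = 0 then 0 else 1) * X1 ^ M * h)"
    by (simp only: h power_Suc mult_ac)
  finally have "X1 * (Tp P + Tp P') = X1 * (Xp ^ (if poly P 1 = 0 then 0 else 1) * X1 ^ M * h)" .
  hence "Tp P + Tp P' = Xp ^ (if poly P 1 = 0 then 0 else 1) * X1 ^ M * h" by simp
  hence "X1 ^ M dvd Tp P + Tp P'" by (metis dvd_mult_left dvd_triv_right mult.commute)
  hence "pv M (Tp P) = pv M (Tp P')" by (rule Suc.IH)
  thus ?case using eq1 by (simp add: pv_Suc)
qed

lemma pv_dvd: "pv M P = pv M P' \<Longrightarrow> X1 ^ M dvd (P + P')"
proof (induction M arbitrary: P P')
  case 0 then show ?case by simp
next
  case (Suc M)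
  have eq1: "poly P 1 = poly P' 1" and eq2: "pv M (Tp P) = pv M (Tp P')"
    using Suc.prems by (simp_all add: pv_Suc)
  have "X1 ^ M dvd Tp P + Tp P'" by (rule Suc.IH[OF eq2])
  hence "X1 * X1 ^ M dvd X1 * (Tp P + Tp P')" by simp
  hence "X1 ^ Suc M dvd Xp ^ (if poly P 1 = 0 then 0 else 1) * (P + P')"
    using Tp_sum[OF eq1] by simp
  thus ?case by (rule X1_pow_dvd_Xp)
qed

lemma pv_inj_on: "inj_on (pv M) (lowp M)"
proof (rule inj_onI)
  fix R R' assume R: "R \<in> lowp M" and R': "R' \<in> lowp M" and eq: "pv M R = pv M R'"
  have dv: "X1 ^ M dvd R + R'" by (rule pv_dvd[OF eq])
  have "R + R' = 0"
  proof (rule ccontr)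
    assume nz: "R + R' \<noteq> 0"
    have "degree (X1 ^ M) \<le> degree (R + R')" by (rule dvd_imp_degree_le[OF dv nz])
    moreover have "degree (R + R') < M"
    proof -
      have "R = 0 \<or> degree R < M" "R' = 0 \<or> degree R' < M" using R R' by (auto simp: lowp_iff)
      thus ?thesis using degree_add_le_max[of R R'] nz by auto
    qed
    ultimately show False by simp
  qed
  thus "R = R'" by (metis add_diff_cancel_right' bpoly_diff add_0)
qed

lemma pv_mod: "pv M P = pv M (P mod X1 ^ M)"
proof (rule pv_congr)
  have "P + P mod X1 ^ M = X1 ^ M * (P div X1 ^ M) + (P mod X1 ^ M + P mod X1 ^ M)"
    by (metis add.assoc mult_div_mod_eq mult.commute)
  thus "X1 ^ M dvd P + P mod X1 ^ M" by simp
qed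

lemma finite_lists_bit: "finite {v :: bit list. length v = M}"
  using finite_lists_length_eq[of "UNIV :: bit set" M] by simp

lemma count_ev:
  assumes "M \<le> n"
  shows "card {P \<in> Pn n. evc P M < j} \<le> 2 ^ (n - M) * card {v :: bit list. length v = M \<and> Zc v < j}"
proof -
  have "{P \<in> Pn n. evc P M < j} = {P \<in> Pn n. Zc (pv M (P mod X1 ^ M)) < j}"
    by (simp add: evc_pv pv_mod[symmetric])
  hence "card {P \<in> Pn n. evc P M < j} = 2 ^ (n - M) * card {r \<in> lowp M. Zc (pv M r) < j}"
    using card_mod_filter[of "X1 ^ M" M n "\<lambda>r. Zc (pv M r) < j"] assms by simp
  also have "card {r \<in> lowp M. Zc (pv M r) < j} \<le> card {v :: bit list. length v = M \<and> Zc v < j}"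
  proof (rule card_inj_on_le)
    show "inj_on (pv M) {r \<in> lowp M. Zc (pv M r) < j}" using pv_inj_on by (rule inj_on_subset) auto
    show "pv M ` {r \<in> lowp M. Zc (pv M r) < j} \<subseteq> {v. length v = M \<and> Zc v < j}" by auto
    show "finite {v :: bit list. length v = M \<and> Zc v < j}"
      by (rule finite_subset[OF _ finite_lists_bit[of M]]) auto
  qed
  finally show ?thesis by simp
qed

lemma lists_Suc: "{v :: bit list. length v = Suc M} = (\<lambda>(b, v). b # v) ` (UNIV \<times> {v. length v = M})"
  by (auto simp: length_Suc_conv)

lemma sum_lists_pow: "(\<Sum>v\<in>{v :: bit list. length v = M}. (\<mu>::real) ^ Zc v) = (1 + \<mu>) ^ M"
proof (induction M)
  case 0 then show ?case by (simp add: Zc_def)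
next
  case (Suc M)
  have inj: "inj_on (\<lambda>(b, v). b # v) ((UNIV :: bit set) \<times> {v :: bit list. length v = M})"
    by (auto simp: inj_on_def)
  have "(\<Sum>v\<in>{v :: bit list. length v = Suc M}. \<mu> ^ Zc v)
      = (\<Sum>x\<in>(UNIV :: bit set) \<times> {v. length v = M}. \<mu> ^ Zc (fst x # snd x))"
    unfolding lists_Suc by (subst sum.reindex[OF inj]) (simp add: case_prod_beta)
  also have "\<dots> = (\<Sum>b\<in>(UNIV :: bit set). \<Sum>v\<in>{v :: bit list. length v = M}. \<mu> ^ Zc (b # v))"
    by (subst sum.cartesian_product) (simp add: case_prod_beta)
  also have "\<dots> = (\<Sum>v\<in>{v :: bit list. length v = M}. \<mu> ^ Zc (0 # v)) + (\<Sum>v\<in>{v :: bit list. length v = M}. \<mu> ^ Zc (1 # v))"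
    by (simp add: UNIV_bit)
  also have "\<dots> = (1 + \<mu>) * (\<Sum>v\<in>{v :: bit list. length v = M}. \<mu> ^ Zc v)"
    by (simp add: Zc_def sum_distrib_left algebra_simps flip: sum.distrib)
  finally show ?case using Suc by simp
qed

lemma binom_tail:
  assumes lam: "(lam::real) \<ge> 1"
  shows "real (card {v :: bit list. length v = M \<and> Zc v < j}) \<le> lam ^ j * (1 + 1 / lam) ^ M"
proof -
  define S where "S = {v :: bit list. length v = M \<and> Zc v < j}"
  have fin: "finite {v :: bit list. length v = M}" by (rule finite_lists_bit)
  have sub: "S \<subseteq> {v :: bit list. length v = M}" by (auto simp: S_def)
  have "real (card S) = (\<Sum>v\<in>S. 1)" by simp
  also have "\<dots> \<le> (\<Sum>v\<in>S. lam ^ j * (1 / lam) ^ Zc v)"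
  proof (rule sum_mono)
    fix v assume "v \<in> S"
    hence z: "Zc v \<le> j" by (simp add: S_def)
    have "lam ^ j * (1 / lam) ^ Zc v = lam ^ (j - Zc v)"
      using z lam by (simp add: power_one_over power_diff)
    also have "\<dots> \<ge> 1" using lam by simp
    finally show "1 \<le> lam ^ j * (1 / lam) ^ Zc v" .
  qed
  also have "\<dots> \<le> (\<Sum>v\<in>{v :: bit list. length v = M}. lam ^ j * (1 / lam) ^ Zc v)"
    by (rule sum_mono2[OF fin sub]) (use lam in simp)
  also have "\<dots> = lam ^ j * (1 + 1 / lam) ^ M"
    by (simp add: sum_distrib_left[symmetric] sum_lists_pow)
  finally show ?thesis by (simp add: S_def)
qed

lemma sg_Pn: "A \<in> Pn n \<Longrightarrow> sg s A \<in> Pn n"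
  using sg_nz_deg by (auto simp: Pn_def)

lemma sg_image: "sg s ` Pn n = Pn n"
proof -
  have sub: "sg s ` Pn n \<subseteq> Pn n" using sg_Pn by auto
  have inj: "inj_on (sg s) (Pn n)" by (auto intro: inj_onI sg_inj)
  have "card (sg s ` Pn n) = card (Pn n)" by (rule card_image[OF inj])
  thus ?thesis using sub by (intro card_subset_eq) auto
qed

lemma card_sg_filter: "card {A \<in> Pn n. \<phi> (sg s A)} = card {B \<in> Pn n. \<phi> B}"
proof -
  have inj: "inj_on (sg s) {A \<in> Pn n. \<phi> (sg s A)}" by (auto intro: inj_onI sg_inj)
  have "sg s ` {A \<in> Pn n. \<phi> (sg s A)} = {B \<in> Pn n. \<phi> B}"
    using sg_image[of s n] by auto
  thus ?thesis using card_image[OF inj] by simp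
qed


definition bad :: "nat \<Rightarrow> nat \<Rightarrow> real \<Rightarrow> bit poly set" where
  "bad n W t = {A \<in> Pn n. \<exists>s<W. real (tp (sg s A)) > t}"

lemma finite_bad[simp]: "finite (bad n W t)" by (simp add: bad_def)

lemma div_Pn: assumes "A \<in> Pn n" "j \<le> n" shows "A div Xp ^ j \<in> Pn (n - j)"
proof -
  have "(\<lambda>P. (P div Xp ^ j, P mod Xp ^ j)) ` Pn n \<subseteq> Pn (n - j) \<times> lowp j"
    using divmod_bij[of "Xp ^ j" j n] assms(2) by (simp add: bij_betw_def)
  thus ?thesis using assms(1) by auto
qed

lemma tp_bound_Pn: "A \<in> Pn n \<Longrightarrow> tp A \<le> (n + 1)^2"
  using tp_props(2)[of A] by (simp add: Pn_def)

lemma bad_empty: assumes "real ((n + 1)^2) \<le> t" shows "bad n W t = {}"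
proof -
  have h: "\<not> real (tp (sg s A)) > t" if "A \<in> Pn n" for A s
  proof -
    have "sg s A \<in> Pn n" using that by (rule sg_Pn)
    hence "real (tp (sg s A)) \<le> t" using tp_bound_Pn[of "sg s A" n] assms
      by (metis of_nat_le_iff order_trans)
    thus ?thesis by simp
  qed
  show ?thesis unfolding bad_def using h by blast
qed

lemma rec_step:
  assumes jM: "j \<le> M" and Mn: "M \<le> n"
  shows "card (bad n W (real M + t)) \<le> W * card {B \<in> Pn n. evc B M < j} + 2 ^ j * card (bad (n - j) (W + M) t)"
proof -
  define U1 where "U1 = (\<Union>s<W. {A \<in> Pn n. evc (sg s A) M < j})"
  define U2 where "U2 = {A \<in> Pn n. A div Xp ^ j \<in> bad (n - j) (W + M) t}"
  have sub: "bad n W (real M + t) \<subseteq> U1 \<union> U2"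
  proof
    fix A assume "A \<in> bad n W (real M + t)"
    then obtain s where A: "A \<in> Pn n" and s: "s < W" and big: "real (tp (sg s A)) > real M + t"
      by (auto simp: bad_def)
    define B where "B = sg s A"
    have B: "B \<in> Pn n" using sg_Pn[OF A] by (simp add: B_def)
    have Bnz: "B \<noteq> 0" and dB: "degree B = n" using B by (auto simp: Pn_def)
    have jn: "j \<le> degree B" using jM Mn dB by simp
    define k where "k = tj B j"
    define A' where "A' = A div Xp ^ j"
    have tpB: "tp B = k + tp (sg (k + s) A')"
      using tp_split[OF Bnz jn] by (simp add: k_def A'_def B_def sg_div sg_add)
    show "A \<in> U1 \<union> U2"
    proof (cases "k \<le> M")
      case True
      have "real (tp (sg (k + s) A')) > t" using big tpB True unfolding B_def by simp
      moreover have "k + s < W + M" using True s by simp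
      moreover have "A' \<in> Pn (n - j)" using div_Pn[OF A] jM Mn by (simp add: A'_def)
      ultimately have "A' \<in> bad (n - j) (W + M) t" by (auto simp: bad_def)
      thus ?thesis using A by (simp add: U2_def A'_def)
    next
      case False
      hence "evc B M < j" using tj_gt_iff[OF Bnz jn, of M] by (simp add: k_def not_le)
      thus ?thesis using A s by (auto simp: U1_def B_def)
    qed
  qed
  have c1: "card U1 \<le> W * card {B \<in> Pn n. evc B M < j}"
  proof -
    have "card U1 \<le> (\<Sum>s<W. card {A \<in> Pn n. evc (sg s A) M < j})"
      unfolding U1_def by (rule card_UN_le) simp
    also have "\<dots> = (\<Sum>s<W. card {B \<in> Pn n. evc B M < j})"
      by (simp add: card_sg_filter[where \<phi> = "\<lambda>B. evc B M < j"])
    finally show ?thesis by simp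
  qed
  have c2: "card U2 = 2 ^ j * card (bad (n - j) (W + M) t)"
  proof -
    have "card U2 = 2 ^ j * card {q \<in> Pn (n - j). q \<in> bad (n - j) (W + M) t}"
      unfolding U2_def by (rule card_div_filter) (use jM Mn in auto)
    also have "{q \<in> Pn (n - j). q \<in> bad (n - j) (W + M) t} = bad (n - j) (W + M) t"
      by (auto simp: bad_def)
    finally show ?thesis .
  qed
  have fin: "finite (U1 \<union> U2)"
    by (rule finite_subset[of _ "Pn n"]) (auto simp: U1_def U2_def)
  have "card (bad n W (real M + t)) \<le> card (U1 \<union> U2)"
    by (rule card_mono[OF fin sub])
  also have "\<dots> \<le> card U1 + card U2" by (rule card_Un_le)
  finally show ?thesis using c1 c2 by simp
qed

lemma evc_tail:
  assumes "M \<le> n" "lam \<ge> 1"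
  shows "real (card {B \<in> Pn n. evc B M < j}) \<le> 2 ^ n * (lam ^ j * ((1 + 1 / lam) / 2) ^ M)"
proof -
  have "real (card {B \<in> Pn n. evc B M < j}) \<le> real (2 ^ (n - M) * card {v :: bit list. length v = M \<and> Zc v < j})"
    using count_ev[OF assms(1), of j] by linarith
  also have "\<dots> \<le> 2 ^ (n - M) * (lam ^ j * (1 + 1 / lam) ^ M)"
    using binom_tail[OF assms(2), of M j] by simp
  also have "\<dots> = 2 ^ n * (lam ^ j * ((1 + 1 / lam) / 2) ^ M)"
  proof -
    have "(2::real) ^ n = 2 ^ (n - M) * 2 ^ M" using assms(1) by (simp flip: power_add)
    thus ?thesis by (simp add: power_divide)
  qed
  finally show ?thesis .
qed

locale params =
  fixes q :: nat and lam :: real and N0 :: nat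
  assumes q: "q \<ge> 1" and lam: "lam \<ge> 1" and N0: "N0 \<ge> 2 * q + 1"
    and th1: "lam ^ q * ((1 + 1 / lam) / 2) ^ (2 * q + 1) \<le> 1"
begin

definition "K = 2 * q + 1"
definition "\<theta> = lam ^ q * ((1 + 1 / lam) / 2) ^ K"
definition "a = real K / real q"
definition "b = real ((N0 + 1) ^ 2)"
definition "\<gamma> = \<theta> ^ ((N0 + 1) div K)"

lemma th_nonneg: "\<theta> \<ge> 0" using lam by (simp add: \<theta>_def)
lemma th_le1: "\<theta> \<le> 1" using th1 by (simp add: \<theta>_def K_def)
lemma gamma_nonneg: "\<gamma> \<ge> 0" using th_nonneg by (simp add: \<gamma>_def)

lemma main_ind: "real (card (bad n W (a * n + b))) \<le> 2 ^ n * (real W + 3 * real n) * real n * \<gamma>"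
proof (induction n arbitrary: W rule: less_induct)
  case (less n)
  show ?case
  proof (cases "n \<le> N0")
    case True
    have "real ((n + 1)^2) \<le> b" using True by (simp add: b_def)
    also have "b \<le> a * n + b" using q by (simp add: a_def)
    finally have "bad n W (a * n + b) = {}" by (rule bad_empty)
    thus ?thesis using gamma_nonneg by simp
  next
    case False
    define u where "u = n div K"
    define j where "j = q * u"
    define M where "M = K * u"
    define m where "m = n - j"
    have K1: "K \<ge> 3" using q by (simp add: K_def)
    have uge: "u \<ge> (N0 + 1) div K" using False by (simp add: u_def div_le_mono)
    have "K div K \<le> (N0 + 1) div K" by (rule div_le_mono) (use N0 in \<open>simp add: K_def\<close>)
    hence "1 \<le> (N0 + 1) div K" using K1 by simp
    hence u1: "u \<ge> 1" using uge by linarith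
    have Mn: "M \<le> n" by (simp add: M_def u_def mult.commute)
    have jM: "j \<le> M" by (simp add: j_def M_def K_def)
    have j1: "j \<ge> 1" using u1 q by (simp add: j_def)
    have mn: "m < n" using j1 jM Mn by (simp add: m_def)
    have nm: "n = m + j" using jM Mn by (simp add: m_def)
    have eqa: "a * n + b = real M + (a * m + b)"
    proof -
      have "a * real j = real M" using q by (simp add: a_def j_def M_def)
      thus ?thesis by (simp add: nm algebra_simps)
    qed
    have step: "real (card (bad n W (a * n + b))) \<le> real W * real (card {B \<in> Pn n. evc B M < j}) + 2 ^ j * real (card (bad m (W + M) (a * m + b)))"
      using rec_step[OF jM Mn, of W "a * m + b"] unfolding eqa m_def
      by (metis (mono_tags, lifting) of_nat_add of_nat_le_iff of_nat_mult of_nat_numeral of_nat_power)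
    have t1: "real (card {B \<in> Pn n. evc B M < j}) \<le> 2 ^ n * \<gamma>"
    proof -
      have "real (card {B \<in> Pn n. evc B M < j}) \<le> 2 ^ n * (lam ^ j * ((1 + 1 / lam) / 2) ^ M)"
        by (rule evc_tail[OF Mn lam])
      also have "lam ^ j * ((1 + 1 / lam) / 2) ^ M = (lam ^ q) ^ u * (((1 + 1 / lam) / 2) ^ K) ^ u"
        by (simp add: j_def M_def power_mult)
      also have "\<dots> = \<theta> ^ u" by (simp add: \<theta>_def power_mult_distrib)
      also have "\<theta> ^ u \<le> \<gamma>" unfolding \<gamma>_def by (rule power_decreasing[OF uge th_nonneg th_le1])
      finally show ?thesis by simp
    qed
    have t2: "real (card (bad m (W + M) (a * m + b))) \<le> 2 ^ m * (real (W + M) + 3 * real m) * real m * \<gamma>"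
      by (rule less.IH[OF mn])
    have ineq: "real W + (real (W + M) + 3 * real m) * real m \<le> (real W + 3 * real n) * real n"
    proof -
      have e1: "K * u = 2 * (q * u) + u" by (simp add: K_def algebra_simps)
      have e2: "u \<le> q * u" using q by simp
      have e3: "q * u \<le> n" using jM Mn by (simp add: j_def)
      have "M + 3 * m \<le> 3 * n" unfolding M_def m_def j_def using e1 e2 e3 by linarith
      hence a1: "real M + 3 * real m \<le> 3 * real n" by linarith
      have a2: "real m \<le> real n - 1" using mn by linarith
      have "(real (W + M) + 3 * real m) * real m \<le> (real W + 3 * real n) * real m"
        using a1 by (intro mult_right_mono) auto
      also have "\<dots> \<le> (real W + 3 * real n) * (real n - 1)"
        using a2 by (intro mult_left_mono) auto
      finally show ?thesis by (simp add: algebra_simps)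
    qed
    have "real (card (bad n W (a * n + b))) \<le> real W * (2 ^ n * \<gamma>) + 2 ^ j * (2 ^ m * (real (W + M) + 3 * real m) * real m * \<gamma>)"
    proof -
      have "real W * real (card {B \<in> Pn n. evc B M < j}) \<le> real W * (2 ^ n * \<gamma>)"
        by (rule mult_left_mono[OF t1]) simp
      moreover have "2 ^ j * real (card (bad m (W + M) (a * m + b))) \<le> 2 ^ j * (2 ^ m * (real (W + M) + 3 * real m) * real m * \<gamma>)"
        by (rule mult_left_mono[OF t2]) simp
      ultimately show ?thesis using step by linarith
    qed
    also have "\<dots> = 2 ^ n * \<gamma> * (real W + (real (W + M) + 3 * real m) * real m)"
    proof -
      have "(2::real) ^ n = 2 ^ j * 2 ^ m" using nm by (simp add: power_add mult.commute)
      thus ?thesis by (simp add: algebra_simps)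
    qed
    also have "\<dots> \<le> 2 ^ n * \<gamma> * ((real W + 3 * real n) * real n)"
      using ineq gamma_nonneg by (intro mult_left_mono) auto
    finally show ?thesis by (simp add: algebra_simps)
  qed
qed

lemma sum_bound:
  "(\<Sum>P\<in>Pn n. real (tp P)) \<le> 2 ^ n * (a * n + b + (1 + 3 * real n) * real n * \<gamma> * real ((n + 1)^2))"
proof -
  define t where "t = a * n + b"
  define G where "G = {P \<in> Pn n. real (tp P) \<le> t}"
  have bad1: "bad n (Suc 0) t = {P \<in> Pn n. real (tp P) > t}" by (auto simp: bad_def)
  have split: "Pn n = G \<union> bad n (Suc 0) t" unfolding bad1 G_def by auto
  have disj: "G \<inter> bad n (Suc 0) t = {}" unfolding bad1 G_def by auto
  have "(\<Sum>P\<in>Pn n. real (tp P)) = (\<Sum>P\<in>G. real (tp P)) + (\<Sum>P\<in>bad n (Suc 0) t. real (tp P))"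
    by (subst split, rule sum.union_disjoint[OF _ finite_bad disj]) (simp add: G_def)
  also have "(\<Sum>P\<in>G. real (tp P)) \<le> (\<Sum>P\<in>G. t)" by (rule sum_mono) (simp add: G_def)
  also have "\<dots> = real (card G) * t" by simp
  also have "\<dots> \<le> 2 ^ n * t"
  proof -
    have "card G \<le> card (Pn n)" by (rule card_mono) (auto simp: G_def)
    hence "real (card G) \<le> 2 ^ n" by (simp add: card_Pn)
    moreover have "t \<ge> 0" using q by (simp add: t_def a_def b_def)
    ultimately show ?thesis by (intro mult_right_mono) auto
  qed
  also have "(\<Sum>P\<in>bad n (Suc 0) t. real (tp P)) \<le> (\<Sum>P\<in>bad n (Suc 0) t. real ((n + 1)^2))"
    by (rule sum_mono) (use tp_bound_Pn in \<open>auto simp: bad1 simp del: of_nat_power\<close>)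
  also have "\<dots> = real (card (bad n (Suc 0) t)) * real ((n + 1)^2)" by simp
  also have "\<dots> \<le> (2 ^ n * (1 + 3 * real n) * real n * \<gamma>) * real ((n + 1)^2)"
    using main_ind[of n "Suc 0"] by (intro mult_right_mono) (auto simp: t_def)
  finally show ?thesis by (simp add: t_def algebra_simps)
qed

end


lemma exists_lam:
  fixes q :: nat assumes q: "q \<ge> 1"
  shows "\<exists>lam::real. lam \<ge> 1 \<and> lam ^ q * ((1 + 1 / lam) / 2) ^ (2 * q + 1) < 1"
proof -
  define K where "K = 2 * q + 1"
  define f where "f = (\<lambda>x::real. x ^ q * ((1 + inverse x) / 2) ^ K)"
  have d1: "((\<lambda>x::real. inverse x) has_real_derivative - (inverse 1 ^ Suc (Suc 0))) (at 1)"
    by (rule DERIV_inverse) simp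
  have d2: "((\<lambda>x::real. 1 + inverse x) has_real_derivative 0 + - (inverse 1 ^ Suc (Suc 0))) (at 1)"
    by (rule DERIV_add[OF DERIV_const d1])
  have d3: "((\<lambda>x::real. (1 + inverse x) / 2) has_real_derivative (0 + - (inverse 1 ^ Suc (Suc 0))) / 2) (at 1)"
    by (rule DERIV_cdivide[OF d2])
  have d4: "((\<lambda>x::real. ((1 + inverse x) / 2) ^ K) has_real_derivative
      of_nat K * ((0 + - (inverse 1 ^ Suc (Suc 0))) / 2 * ((1 + inverse 1) / 2) ^ (K - Suc 0))) (at 1)"
    by (rule DERIV_power[OF d3])
  have d5: "((\<lambda>x::real. x ^ q) has_real_derivative real q * (1 ^ (q - Suc 0))) (at 1)"
    by (rule DERIV_pow)
  have d6: "(f has_real_derivative (real q * (1 ^ (q - Suc 0))) * ((1 + inverse 1) / 2) ^ K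
      + of_nat K * ((0 + - (inverse 1 ^ Suc (Suc 0))) / 2 * ((1 + inverse 1) / 2) ^ (K - Suc 0)) * 1 ^ q) (at 1)"
    unfolding f_def by (rule DERIV_mult[OF d5 d4])
  have val: "(real q * (1 ^ (q - Suc 0))) * ((1 + inverse 1) / 2) ^ K
      + of_nat K * ((0 + - (inverse 1 ^ Suc (Suc 0))) / 2 * ((1 + inverse 1) / 2) ^ (K - Suc 0)) * 1 ^ q = (- 1 / 2 :: real)"
    by (simp add: K_def field_simps)
  have d: "(f has_real_derivative (- 1 / 2)) (at 1)" using d6 val by simp
  obtain dd where dd: "dd > 0" "\<forall>h>0. h < dd \<longrightarrow> f 1 > f (1 + h)"
    using DERIV_neg_dec_right[OF d] by auto
  define h where "h = dd / 2"
  have "f (1 + h) < f 1" using dd by (simp add: h_def)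
  moreover have "f 1 = 1" by (simp add: f_def)
  moreover have "1 + h \<ge> 1" using dd by (simp add: h_def)
  ultimately show ?thesis by (intro exI[of _ "1 + h"]) (simp add: f_def K_def inverse_eq_divide)
qed


lemma poly_geo_tendsto:
  fixes \<theta> :: real
  assumes t0: "0 < \<theta>" and t1: "\<theta> < 1"
  shows "((\<lambda>r::nat. (real r + 1) ^ k * \<theta> ^ r) \<longlongrightarrow> 0) sequentially"
proof -
  define \<kappa> where "\<kappa> = - ln \<theta>"
  have kpos: "\<kappa> > 0" using t0 t1 by (simp add: \<kappa>_def)
  have eq: "(real r + 1) ^ k * \<theta> ^ r = (1 / \<theta>) * (1 / \<kappa> ^ k) * ((\<kappa> * (real r + 1)) ^ k / exp (\<kappa> * (real r + 1)))" for r
  proof -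
    have "exp (\<kappa> * (real r + 1)) = 1 / \<theta> ^ (r + 1)"
    proof -
      have "exp (\<kappa> * (real r + 1)) = exp (real (r + 1) * (- ln \<theta>))" by (simp add: \<kappa>_def mult.commute)
      also have "\<dots> = exp (- ln \<theta>) ^ (r + 1)" by (rule exp_of_nat_mult)
      also have "exp (- ln \<theta>) = 1 / \<theta>" using t0 by (simp add: exp_minus inverse_eq_divide)
      finally show ?thesis by (simp add: power_one_over)
    qed
    hence "(1 / \<theta>) * (1 / \<kappa> ^ k) * ((\<kappa> * (real r + 1)) ^ k / exp (\<kappa> * (real r + 1)))
        = (1 / \<theta>) * (1 / \<kappa> ^ k) * (\<kappa> ^ k * (real r + 1) ^ k * \<theta> ^ (r + 1))"
      using t0 by (simp add: power_mult_distrib)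
    also have "\<dots> = (real r + 1) ^ k * \<theta> ^ r" using t0 kpos by (simp add: field_simps)
    finally show ?thesis by simp
  qed
  have lim1: "filterlim (\<lambda>r::nat. \<kappa> * (real r + 1)) at_top sequentially"
  proof (rule filterlim_tendsto_pos_mult_at_top[OF tendsto_const kpos])
    have "filterlim (\<lambda>r::nat. 1 + real r) at_top sequentially"
      by (rule filterlim_tendsto_add_at_top[OF tendsto_const filterlim_real_sequentially])
    thus "filterlim (\<lambda>r::nat. real r + 1) at_top sequentially" by (simp add: add.commute)
  qed
  have lim2: "((\<lambda>r::nat. (\<kappa> * (real r + 1)) ^ k / exp (\<kappa> * (real r + 1))) \<longlongrightarrow> 0) sequentially"
    using filterlim_compose[OF tendsto_power_div_exp_0[of k] lim1] by (simp add: o_def)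
  have "((\<lambda>r::nat. (1 / \<theta>) * (1 / \<kappa> ^ k) * ((\<kappa> * (real r + 1)) ^ k / exp (\<kappa> * (real r + 1)))) \<longlongrightarrow> (1 / \<theta>) * (1 / \<kappa> ^ k) * 0) sequentially"
    by (intro tendsto_mult tendsto_const lim2)
  thus ?thesis by (simp add: eq)
qed

lemma poly_geo_ev:
  fixes \<theta> \<delta> :: real
  assumes "0 < \<theta>" "\<theta> < 1" "\<delta> > 0"
  shows "\<exists>R. \<forall>r\<ge>R. (real r + 1) ^ k * \<theta> ^ r \<le> \<delta>"
proof -
  have "eventually (\<lambda>r. (real r + 1) ^ k * \<theta> ^ r < \<delta>) sequentially"
    using order_tendstoD(2)[OF poly_geo_tendsto[OF assms(1,2)] assms(3)] by simp
  then obtain R where "\<forall>r\<ge>R. (real r + 1) ^ k * \<theta> ^ r < \<delta>" by (auto simp: eventually_sequentially)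
  thus ?thesis by (intro exI[of _ R]) (auto intro: less_imp_le)
qed

theorem comb_main:
  fixes \<epsilon> :: real
  assumes eps: "\<epsilon> > 0"
  shows "\<exists>n0. \<forall>n\<ge>n0. (\<Sum>P\<in>Pn n. real (tp P)) \<le> 2 * (1 + \<epsilon>) * real n * 2 ^ n"
proof -
  define q where "q = nat \<lceil>1 / \<epsilon>\<rceil>"
  have qe: "real q \<ge> 1 / \<epsilon>" unfolding q_def by linarith
  have "(1::int) \<le> \<lceil>1 / \<epsilon>\<rceil>" using eps by (simp add: one_le_ceiling)
  hence q1: "q \<ge> 1" unfolding q_def by linarith
  have qinv: "1 / real q \<le> \<epsilon>" using qe eps q1 by (simp add: field_simps)
  obtain lam :: real where lam: "lam \<ge> 1" and th: "lam ^ q * ((1 + 1 / lam) / 2) ^ (2 * q + 1) < 1"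
    using exists_lam[OF q1] by auto
  define K where "K = 2 * q + 1"
  define \<theta>0 where "\<theta>0 = lam ^ q * ((1 + 1 / lam) / 2) ^ K"
  have th0pos: "\<theta>0 > 0"
  proof -
    have l0: "lam > 0" using lam by simp
    have i0: "1 / lam > 0" using l0 by simp
    have "1 + 1 / lam > 0" by (rule add_pos_pos[OF zero_less_one i0])
    hence "(1 + 1 / lam) / 2 > 0" by (rule divide_pos_pos) simp
    thus ?thesis using l0 by (simp add: \<theta>0_def)
  qed
  have th0lt: "\<theta>0 < 1" using th by (simp add: \<theta>0_def K_def)
  have K0: "real K > 0" by (simp add: K_def)
  define C where "C = (2 * real K ^ 2 / \<epsilon>) ^ 3"
  have Cpos: "C > 0" using eps K0 by (simp add: C_def)
  define \<delta> where "\<delta> = \<epsilon> / (32 * C)"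
  have dpos: "\<delta> > 0" using eps Cpos by (simp add: \<delta>_def)
  obtain R where R: "\<forall>r\<ge>R. (real r + 1) ^ 6 * \<theta>0 ^ r \<le> \<delta>"
    using poly_geo_ev[OF th0pos th0lt dpos, of 6] by auto
  define R' where "R' = max R 2"
  define n0 where "n0 = nat \<lceil>2 * (real K * (real R' + 1)) ^ 2 / \<epsilon>\<rceil> + 1"
  show ?thesis
  proof (intro exI[of _ n0] allI impI)
    fix n assume nn0: "n0 \<le> n"
    define x where "x = sqrt (\<epsilon> * real n / 2) / real K"
    define r where "r = nat \<lfloor>x\<rfloor>"
    have x0: "x \<ge> 0" using eps K0 by (simp add: x_def)
    have rx: "real r \<le> x" "x < real r + 1" using x0 by (simp_all add: r_def)
    have n1: "n \<ge> 1" using nn0 by (simp add: n0_def)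
    have nbig: "real n \<ge> 2 * (real K * (real R' + 1)) ^ 2 / \<epsilon>"
      using nn0 unfolding n0_def by linarith
    have "\<epsilon> * real n / 2 \<ge> (real K * (real R' + 1)) ^ 2"
      using nbig eps by (simp add: field_simps)
    hence "sqrt (\<epsilon> * real n / 2) \<ge> real K * (real R' + 1)"
      by (metis real_le_rsqrt)
    hence "x \<ge> real R' + 1" using K0 by (simp add: x_def field_simps)
    hence rR: "r \<ge> R'" using rx(2) by linarith
    hence r2: "r \<ge> 2" and rR0: "r \<ge> R" by (auto simp: R'_def)
    define N0 where "N0 = K * r - 1"
    have N0K: "N0 + 1 = K * r" using r2 by (simp add: N0_def K_def)
    have "K * r \<ge> K * 2" using r2 by (intro mult_le_mono2)
    moreover have "K \<ge> 1" by (simp add: K_def)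
    ultimately have "N0 \<ge> K" unfolding N0_def by linarith
    hence N0ge: "N0 \<ge> 2 * q + 1" by (simp add: K_def)
    interpret P: params q lam N0
      by unfold_locales (use q1 lam N0ge th in \<open>auto simp: K_def less_imp_le\<close>)
    have thP: "P.\<theta> = \<theta>0" by (simp add: P.\<theta>_def \<theta>0_def P.K_def K_def)
    have PK: "P.K = K" by (simp add: P.K_def K_def)
    have dv: "(N0 + 1) div K = r" unfolding N0K by (rule nonzero_mult_div_cancel_left) (simp add: K_def)
    have gam: "P.\<gamma> = \<theta>0 ^ r" unfolding P.\<gamma>_def thP PK dv ..
    have aP: "P.a \<le> 2 + \<epsilon>"
    proof -
      have "P.a = 2 + 1 / real q" using q1 by (simp add: P.a_def P.K_def field_simps)
      thus ?thesis using qinv by simp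
    qed
    have bP: "P.b \<le> \<epsilon> * real n / 2"
    proof -
      have "real K * real r \<le> sqrt (\<epsilon> * real n / 2)" using rx(1) K0 by (simp add: x_def field_simps)
      hence "(real K * real r) ^ 2 \<le> (sqrt (\<epsilon> * real n / 2)) ^ 2"
        using K0 by (intro power_mono) auto
      also have "\<dots> = \<epsilon> * real n / 2" using eps by simp
      moreover have "real (N0 + 1) = real K * real r" using N0K by (metis of_nat_mult)
      ultimately show ?thesis by (simp add: P.b_def)
    qed
    have n3: "real n ^ 3 \<le> C * (real r + 1) ^ 6"
    proof -
      have "sqrt (\<epsilon> * real n / 2) < real K * (real r + 1)" using rx(2) K0 by (simp add: x_def field_simps)
      hence "(sqrt (\<epsilon> * real n / 2)) ^ 2 < (real K * (real r + 1)) ^ 2"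
        using eps by (intro power_strict_mono) auto
      hence "\<epsilon> * real n / 2 < (real K * (real r + 1)) ^ 2" using eps by simp
      hence lt: "\<epsilon> * real n / 2 < real K ^ 2 * (real r + 1) ^ 2" by (simp add: power_mult_distrib)
      have "\<epsilon> * (2 * real K ^ 2 / \<epsilon> * (real r + 1) ^ 2) = 2 * (real K ^ 2 * (real r + 1) ^ 2)"
        using eps by simp
      hence "\<epsilon> * real n \<le> \<epsilon> * (2 * real K ^ 2 / \<epsilon> * (real r + 1) ^ 2)" using lt by linarith
      hence "real n \<le> 2 * real K ^ 2 / \<epsilon> * (real r + 1) ^ 2"
        using eps by (rule mult_left_le_imp_le)
      hence "real n ^ 3 \<le> (2 * real K ^ 2 / \<epsilon> * (real r + 1) ^ 2) ^ 3" by (intro power_mono) auto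
      also have "\<dots> = (2 * real K ^ 2 / \<epsilon>) ^ 3 * ((real r + 1) ^ 2) ^ 3" by (rule power_mult_distrib)
      also have "((real r + 1) ^ 2) ^ 3 = (real r + 1) ^ 6" by (simp flip: power_mult)
      finally have "real n ^ 3 \<le> (2 * real K ^ 2 / \<epsilon>) ^ 3 * (real r + 1) ^ 6" .
      thus ?thesis by (simp add: C_def)
    qed
    have err: "(1 + 3 * real n) * real n * P.\<gamma> * real ((n + 1) ^ 2) \<le> \<epsilon> * real n / 2"
    proof -
      have p1: "(1 + 3 * real n) * real ((n + 1) ^ 2) \<le> 16 * real n ^ 3"
      proof -
        have "real n \<ge> 1" using n1 by simp
        hence "1 + 3 * real n \<le> 4 * real n" "real (n + 1) \<le> 2 * real n" by linarith+
        have e1: "real ((n + 1) ^ 2) = (real n + 1) ^ 2" by simp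
        have e2: "real n + 1 \<le> 2 * real n" using \<open>real (n + 1) \<le> 2 * real n\<close> by simp
        have "(real n + 1) ^ 2 \<le> (2 * real n) ^ 2" by (rule power_mono[OF e2]) simp
        hence sq: "real ((n + 1) ^ 2) \<le> (2 * real n) ^ 2" by (simp only: e1)
        have "(1 + 3 * real n) * real ((n + 1) ^ 2) \<le> (4 * real n) * (2 * real n) ^ 2"
          by (rule mult_mono[OF \<open>1 + 3 * real n \<le> 4 * real n\<close> sq]) auto
        also have "\<dots> = 16 * real n ^ 3" by (simp add: power2_eq_square power3_eq_cube)
        finally show ?thesis .
      qed
      have "(1 + 3 * real n) * real n * P.\<gamma> * real ((n + 1) ^ 2) = ((1 + 3 * real n) * real ((n + 1) ^ 2)) * (real n * \<theta>0 ^ r)"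
        by (simp add: gam algebra_simps)
      also have "\<dots> \<le> (16 * real n ^ 3) * (real n * \<theta>0 ^ r)"
        using p1 th0pos by (intro mult_right_mono) auto
      also have "\<dots> = 16 * real n * (real n ^ 3 * \<theta>0 ^ r)" by (simp add: algebra_simps)
      also have "\<dots> \<le> 16 * real n * (C * (real r + 1) ^ 6 * \<theta>0 ^ r)"
        using n3 th0pos by (intro mult_left_mono mult_right_mono) auto
      also have "\<dots> = 16 * real n * C * ((real r + 1) ^ 6 * \<theta>0 ^ r)" by (simp add: algebra_simps)
      also have "\<dots> \<le> 16 * real n * C * \<delta>"
        using R rR0 Cpos by (intro mult_left_mono) auto
      also have "\<dots> = \<epsilon> * real n / 2" using Cpos by (simp add: \<delta>_def field_simps)
      finally show ?thesis .
    qed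
    have "(\<Sum>P\<in>Pn n. real (tp P)) \<le> 2 ^ n * (P.a * real n + P.b + (1 + 3 * real n) * real n * P.\<gamma> * real ((n + 1)^2))"
      by (rule P.sum_bound)
    also have "P.a * real n + P.b + (1 + 3 * real n) * real n * P.\<gamma> * real ((n + 1)^2) \<le> 2 * (1 + \<epsilon>) * real n"
    proof -
      have "P.a * real n \<le> (2 + \<epsilon>) * real n" using aP by (intro mult_right_mono) auto
      thus ?thesis using bP err by (simp add: algebra_simps)
    qed
    hence "2 ^ n * (P.a * real n + P.b + (1 + 3 * real n) * real n * P.\<gamma> * real ((n + 1)^2)) \<le> 2 ^ n * (2 * (1 + \<epsilon>) * real n)"
      by (intro mult_left_mono) auto
    finally show "(\<Sum>P\<in>Pn n. real (tp P)) \<le> 2 * (1 + \<epsilon>) * real n * 2 ^ n" by (simp add: mult.commute)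
  qed
qed


notation fls_nth (infixl "$$" 75)

lemma fls_nth_Abs:
  assumes "\<exists>m. \<forall>n>m. f (- int n) = 0"
  shows "fls_nth (Abs_fls f) = f"
proof -
  have "\<forall>\<^sub>\<infinity> n. f (- int n) = 0" using assms by (simp add: MOST_nat)
  thus ?thesis by (simp add: Abs_fls_inverse)
qed

lemma coeff_poly_part: "coeff (poly_part r) i = r $$ (- int i)"
proof -
  define N where "N = nat (degL r) + 1"
  have "coeff (poly_part r) i = nth_default 0 (map (\<lambda>n. coeffL r (int n)) [0..<N]) i"
    by (simp add: poly_part_def N_def)
  also have "\<dots> = r $$ (- int i)"
  proof (cases "i < N")
    case True then show ?thesis by (simp add: nth_default_def coeffL_def)
  next
    case False
    hence "- int i < fls_subdegree r" by (simp add: N_def degL_def)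
    hence "r $$ (- int i) = 0" by simp
    thus ?thesis using False by (simp add: nth_default_def)
  qed
  finally show ?thesis .
qed

lemma poly_part_eqI: "(\<And>i. r $$ (- int i) = coeff p i) \<Longrightarrow> poly_part r = p"
  by (rule poly_eqI) (simp add: coeff_poly_part)

definition negL :: "F2L \<Rightarrow> bool" where "negL f \<longleftrightarrow> (\<forall>i::nat. f $$ (- int i) = 0)"

lemma negL_iff: "negL f \<longleftrightarrow> f = 0 \<or> fls_subdegree f > 0"
proof
  assume h: "negL f"
  show "f = 0 \<or> fls_subdegree f > 0"
  proof (rule ccontr)
    assume "\<not> (f = 0 \<or> fls_subdegree f > 0)"
    hence nz: "f \<noteq> 0" and le: "fls_subdegree f \<le> 0" by auto
    have "f $$ (- int (nat (- fls_subdegree f))) = f $$ fls_subdegree f" using le by simp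
    also have "\<dots> \<noteq> 0" using nz by simp
    finally show False using h[unfolded negL_def, rule_format, of "nat (- fls_subdegree f)"] by simp
  qed
next
  assume "f = 0 \<or> fls_subdegree f > 0"
  thus "negL f" by (auto simp: negL_def)
qed

lemma negL_add: "negL f \<Longrightarrow> negL g \<Longrightarrow> negL (f + g)" by (simp add: negL_def)

lemma subdeg_xL1: "fls_subdegree (xL + 1 :: F2L) = -1"
  by (rule fls_subdegree_eqI) (auto simp: xL_def)

lemma xL1_nz: "(xL + 1 :: F2L) \<noteq> 0"
  using subdeg_xL1 by (metis fls_zero_subdegree neg_one_neq_zero)

lemma negL_div: assumes "negL f" shows "negL (f / (xL + 1))"
proof (cases "f = 0")
  case False
  hence "fls_subdegree f > 0" using assms by (simp add: negL_iff)
  moreover have "fls_subdegree (f / (xL + 1)) = fls_subdegree f + 1"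
    using False xL1_nz by (simp add: fls_divide_subdegree subdeg_xL1)
  ultimately show ?thesis by (simp add: negL_iff)
qed (simp add: negL_def)

lemma negL_xdiv: assumes "negL f" shows "negL (xL * f / (xL + 1))"
proof (cases "f = 0")
  case False
  hence "fls_subdegree f > 0" using assms by (simp add: negL_iff)
  moreover have "xL * f \<noteq> 0" using False by (simp add: xL_def)
  moreover have "fls_subdegree (xL * f) = fls_subdegree f - 1"
    using False by (simp add: xL_def)
  ultimately have "fls_subdegree (xL * f / (xL + 1)) = fls_subdegree f"
    using xL1_nz by (simp add: fls_divide_subdegree subdeg_xL1)
  thus ?thesis using \<open>fls_subdegree f > 0\<close> by (simp add: negL_iff)
qed (simp add: negL_def)

lemma negL_inv: "negL (1 / (xL + 1))"
proof -
  have "fls_subdegree (1 / (xL + 1) :: F2L) = 1"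
    using xL1_nz by (simp add: fls_divide_subdegree subdeg_xL1)
  thus ?thesis by (simp add: negL_iff)
qed

definition pL :: "bit poly \<Rightarrow> F2L" where
  "pL p = Abs_fls (\<lambda>k. if k \<le> 0 then coeff p (nat (- k)) else 0)"

lemma pL_nth: "pL p $$ k = (if k \<le> 0 then coeff p (nat (- k)) else 0)"
proof -
  have "\<forall>n>degree p. (\<lambda>k. if k \<le> 0 then coeff p (nat (- k)) else 0) (- int n) = 0"
    by (auto intro: coeff_eq_0)
  thus ?thesis unfolding pL_def by (subst fls_nth_Abs) auto
qed

lemma pL_nth_neg[simp]: "pL p $$ (- int i) = coeff p i" by (simp add: pL_nth)

lemma pL_add: "pL (p + q) = pL p + pL q" by (rule fls_eqI) (simp add: pL_nth)
lemma pL_1: "pL 1 = 1" by (rule fls_eqI) (simp add: pL_nth)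
lemma xL_times_nth: "(xL * g) $$ k = g $$ (k + 1)"
  by (simp add: xL_def fls_X_inv_times_conv_shift)
lemma pL_Xp: "pL (Xp * p) = xL * pL p"
proof (rule fls_eqI)
  fix k
  have X: "Xp * p = pCons 0 p" by (simp add: Xp_def)
  show "pL (Xp * p) $$ k = (xL * pL p) $$ k"
  proof (cases "k < 0")
    case True
    define i where "i = nat (- k) - 1"
    have k: "k = - int (Suc i)" using True by (simp add: i_def)
    have a: "(xL * pL p) $$ k = pL p $$ (- int i)" by (simp add: xL_times_nth k)
    have "pL (Xp * p) $$ k = coeff (pCons 0 p) (Suc i)" unfolding k X by (rule pL_nth_neg)
    thus ?thesis using a by simp
  next
    case False
    hence "k + 1 > 0" by simp
    hence "(xL * pL p) $$ k = 0" by (simp add: xL_times_nth pL_nth)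
    moreover have "pL (Xp * p) $$ k = 0" using False by (simp add: X pL_nth)
    ultimately show ?thesis by simp
  qed
qed
lemma pL_X1: "pL (X1 * p) = (xL + 1) * pL p"
proof -
  have "X1 * p = Xp * p + p" by (simp add: X1_def Xp_def algebra_simps)
  thus ?thesis by (simp add: pL_add pL_Xp algebra_simps)
qed

lemma bfls_add_self[simp]: "(g :: F2L) + g = 0" by (rule fls_eqI) simp

lemma poly_part_decomp: "negL (r - pL (poly_part r))"
  by (simp add: negL_def coeff_poly_part)

lemma poly_part_pL: "negL f \<Longrightarrow> poly_part (pL p + f) = p"
  by (rule poly_part_eqI) (simp add: negL_def)

lemma S_step: "poly_part (S_map r) = Tp (poly_part r)"
proof -
  define p where "p = poly_part r"
  define f where "f = r - pL p"
  have f: "negL f" by (simp add: f_def p_def poly_part_decomp)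
  have r: "r = pL p + f" by (simp add: f_def)
  show ?thesis
  proof (cases "poly p 1 = 0")
    case True
    have e: "pL p = (xL + 1) * pL (Tp p)" using Tp_even[OF True] pL_X1 by metis
    have "r / (xL + 1) = ((xL + 1) * pL (Tp p)) / (xL + 1) + f / (xL + 1)"
      by (simp only: r e add_divide_distrib)
    also have "((xL + 1) * pL (Tp p)) / (xL + 1) = pL (Tp p)" using xL1_nz by simp
    finally have "r / (xL + 1) = pL (Tp p) + f / (xL + 1)" .
    hence "poly_part (r / (xL + 1)) = Tp p" using poly_part_pL negL_div[OF f] by simp
    thus ?thesis using True by (simp add: S_map_def p_def)
  next
    case False
    hence odd: "poly p 1 = 1" by simp
    have "pL (X1 * Tp p) = pL (Xp * p) + 1" using Tp_odd[OF odd] by (simp add: pL_add pL_1)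
    hence "(xL + 1) * pL (Tp p) = xL * pL p + 1" by (simp add: pL_X1 pL_Xp)
    hence e: "xL * pL p = (xL + 1) * pL (Tp p) + 1"
      by (metis add.assoc add_0_right bfls_add_self)
    have "xL * r = (xL + 1) * pL (Tp p) + (1 + xL * f)" by (simp add: r distrib_left e add.assoc)
    hence "xL * r / (xL + 1) = ((xL + 1) * pL (Tp p)) / (xL + 1) + (1 / (xL + 1) + xL * f / (xL + 1))"
      by (simp only: add_divide_distrib)
    also have "((xL + 1) * pL (Tp p)) / (xL + 1) = pL (Tp p)" using xL1_nz by simp
    finally have "xL * r / (xL + 1) = pL (Tp p) + (1 / (xL + 1) + xL * f / (xL + 1))" .
    hence "poly_part (xL * r / (xL + 1)) = Tp p"
      using poly_part_pL negL_add[OF negL_inv negL_xdiv[OF f]] by simp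
    thus ?thesis using False by (simp add: S_map_def p_def)
  qed
qed

lemma S_iter: "poly_part ((S_map ^^ k) r) = (Tp ^^ k) (poly_part r)"
  by (induction k) (simp_all add: S_step)

lemma tau_tp: "tau r = tp (poly_part r)"
  by (simp add: tau_def tp_def S_iter)


definition Pof :: "nat \<Rightarrow> bool list \<Rightarrow> bit poly" where
  "Pof n v = Poly (map (\<lambda>i. if i = n then 1 else if v ! (n - 1 - i) then 1 else 0) [0..<Suc n])"

lemma coeff_Pof:
  "coeff (Pof n v) i = (if i = n then 1 else if i < n \<and> v ! (n - 1 - i) then 1 else 0)"
  by (cases "i < Suc n") (auto simp: Pof_def nth_default_def nth_map_upt simp del: upt_Suc)

lemma embedQ_nth:
  "embedQ n \<omega> $$ k = (if k = - int n then 1 else if - int n < k then (if \<omega> (nat (k + int n - 1)) then 1 else 0) else 0)"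
  unfolding embedQ_def by (subst fls_nth_Abs) (auto intro: exI[of _ n])

lemma poly_part_embedQ: "poly_part (embedQ n \<omega>) = Pof n (map \<omega> [0..<n])"
proof (rule poly_part_eqI)
  fix i
  show "embedQ n \<omega> $$ (- int i) = coeff (Pof n (map \<omega> [0..<n])) i"
  proof (cases "i < n")
    case True
    have "nat (- int i + int n - 1) = n - 1 - i" using True by simp
    thus ?thesis using True by (simp add: embedQ_nth coeff_Pof)
  qed (auto simp: embedQ_nth coeff_Pof)
qed

lemma inj_embedQ: "inj (embedQ n)"
proof (rule injI)
  fix \<omega> \<omega>' assume eq: "embedQ n \<omega> = embedQ n \<omega>'"
  show "\<omega> = \<omega>'"
  proof
    fix i
    define k where "k = 1 + int i - int n"
    have k1: "k \<noteq> - int n" "- int n < k" by (auto simp: k_def)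
    have k2: "nat (k + int n - 1) = i" by (simp add: k_def)
    have "embedQ n \<omega> $$ k = embedQ n \<omega>' $$ k" using eq by simp
    thus "\<omega> i = \<omega>' i" using k1 k2 by (auto simp: embedQ_nth split: if_splits)
  qed
qed

lemma Pof_Pn: assumes "length v = n" shows "Pof n v \<in> Pn n"
proof -
  have c: "coeff (Pof n v) n = 1" by (simp add: coeff_Pof)
  hence nz: "Pof n v \<noteq> 0" by auto
  have "degree (Pof n v) \<le> n" by (rule degree_le) (auto simp: coeff_Pof)
  moreover have "n \<le> degree (Pof n v)" using c by (intro le_degree) simp
  ultimately show ?thesis using nz by (simp add: Pn_def)
qed

lemma Pof_bij: "bij_betw (Pof n) {v. length v = n} (Pn n)"
proof (rule bij_betw_imageI)
  show "inj_on (Pof n) {v. length v = n}"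
  proof (rule inj_onI)
    fix v w assume v: "v \<in> {v. length v = n}" and w: "w \<in> {v. length v = n}" and eq: "Pof n v = Pof n w"
    show "v = w"
    proof (rule nth_equalityI)
      show "length v = length w" using v w by simp
      fix k assume k: "k < length v"
      define i where "i = n - 1 - k"
      have i: "i < n" "n - 1 - i = k" using k v by (auto simp: i_def)
      have "coeff (Pof n v) i = coeff (Pof n w) i" using eq by simp
      thus "v ! k = w ! k" using i by (auto simp: coeff_Pof split: if_splits)
    qed
  qed
  show "Pof n ` {v. length v = n} = Pn n"
  proof
    show "Pof n ` {v. length v = n} \<subseteq> Pn n" using Pof_Pn by auto
    show "Pn n \<subseteq> Pof n ` {v. length v = n}"
    proof
      fix P assume P: "P \<in> Pn n"
      define v where "v = map (\<lambda>k. coeff P (n - 1 - k) = 1) [0..<n]"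
      have lv: "length v = n" by (simp add: v_def)
      have "Pof n v = P"
      proof (rule poly_eqI)
        fix i
        show "coeff (Pof n v) i = coeff P i"
        proof (cases "i < n")
          case True
          hence "v ! (n - 1 - i) = (coeff P i = 1)" by (simp add: v_def)
          thus ?thesis using True by (auto simp: coeff_Pof)
        next
          case False
          show ?thesis
          proof (cases "i = n")
            case True
            have "coeff P (degree P) \<noteq> 0" by (rule leading_coeff_neq_0) (use P in \<open>simp add: Pn_def\<close>)
            moreover have "degree P = n" using P by (simp add: Pn_def)
            ultimately have "coeff P n \<noteq> 0" by metis
            thus ?thesis using True by (simp add: coeff_Pof)
          next
            case False
            hence "i > n" using \<open>\<not> i < n\<close> by simp
            hence "coeff P i = 0" using P by (intro coeff_eq_0) (simp add: Pn_def)
            thus ?thesis using False \<open>\<not> i < n\<close> by (simp add: coeff_Pof)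
          qed
        qed
      qed
      thus "P \<in> Pof n ` {v. length v = n}" using lv by blast
    qed
  qed
qed

abbreviation "Bern \<equiv> measure_pmf (bernoulli_pmf (1/2))"

lemma coins_eq: "coins = PiM UNIV (\<lambda>_. Bern)" by (simp add: coins_def)

lemma space_coins[simp]: "space coins = UNIV"
  by (simp add: coins_def space_PiM)

definition Cyl :: "nat \<Rightarrow> bool list \<Rightarrow> (nat \<Rightarrow> bool) set" where
  "Cyl n v = {\<omega>. map \<omega> [0..<n] = v}"

lemma Cyl_emb:
  assumes "length v = n"
  shows "Cyl n v = prod_emb UNIV (\<lambda>_. Bern) {..<n} (PiE {..<n} (\<lambda>i. {v ! i}))"
proof -
  have "map \<omega> [0..<n] = v \<longleftrightarrow> (\<forall>i<n. \<omega> i = v ! i)" for \<omega>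
    using assms by (auto simp: list_eq_iff_nth_eq)
  thus ?thesis by (auto simp: Cyl_def prod_emb_def space_PiM PiE_iff restrict_def)
qed

lemma Cyl_sets: "length v = n \<Longrightarrow> Cyl n v \<in> sets coins"
  unfolding coins_def by (subst Cyl_emb) (auto intro!: sets_PiM_I)

lemma Cyl_measure: assumes "length v = n" shows "emeasure coins (Cyl n v) = ennreal ((1/2) ^ n)"
proof -
  have "emeasure coins (Cyl n v) = (\<Prod>i\<in>{..<n}. emeasure Bern {v ! i})"
    unfolding coins_def Cyl_emb[OF assms]
    by (rule emeasure_PiM_emb) (auto intro: prob_space_measure_pmf)
  also have "\<dots> = (\<Prod>i\<in>{..<n}. ennreal (1/2))"
  proof (rule prod.cong)
    fix i show "emeasure Bern {v ! i} = ennreal (1/2)"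
      by (cases "v ! i") (simp_all add: emeasure_pmf_single)
  qed simp
  also have "\<dots> = ennreal (1/2) ^ n" by (simp only: prod_constant card_lessThan)
  also have "\<dots> = ennreal ((1/2) ^ n)" by (rule ennreal_power) simp
  finally show ?thesis .
qed

lemma finite_bool_lists: "finite {v :: bool list. length v = n}"
  using finite_lists_length_eq[of "UNIV :: bool set" n] by simp

lemma meas_ind: "length v = n \<Longrightarrow> (\<lambda>x. (c::ennreal) * indicator (Cyl n v) x) \<in> borel_measurable coins"
  by (intro borel_measurable_times_ennreal borel_measurable_const borel_measurable_indicator Cyl_sets)

lemma fun_as_sum:
  fixes f :: "bool list \<Rightarrow> ennreal"
  shows "f (map \<omega> [0..<n]) = (\<Sum>v\<in>{v :: bool list. length v = n}. f v * indicator (Cyl n v) \<omega>)"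
proof -
  have "(\<Sum>v\<in>{v :: bool list. length v = n}. f v * indicator (Cyl n v) \<omega>)
      = (\<Sum>v\<in>{map \<omega> [0..<n]}. f v * indicator (Cyl n v) \<omega>)"
    by (rule sum.mono_neutral_right) (auto simp: finite_bool_lists Cyl_def split: split_indicator)
  also have "\<dots> = f (map \<omega> [0..<n])" by (simp add: Cyl_def)
  finally show ?thesis by simp
qed

lemma integral_coins:
  fixes f :: "bool list \<Rightarrow> ennreal"
  shows "(\<integral>\<^sup>+ \<omega>. f (map \<omega> [0..<n]) \<partial>coins) = (\<Sum>v\<in>{v :: bool list. length v = n}. f v) * ennreal ((1/2) ^ n)"
proof -
  have "(\<integral>\<^sup>+ \<omega>. f (map \<omega> [0..<n]) \<partial>coins) = (\<integral>\<^sup>+ \<omega>. (\<Sum>v\<in>{v :: bool list. length v = n}. f v * indicator (Cyl n v) \<omega>) \<partial>coins)"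
    by (simp only: fun_as_sum[of f])
  also have "\<dots> = (\<Sum>v\<in>{v :: bool list. length v = n}. \<integral>\<^sup>+ \<omega>. f v * indicator (Cyl n v) \<omega> \<partial>coins)"
    by (rule nn_integral_sum) (auto intro: meas_ind)
  also have "\<dots> = (\<Sum>v\<in>{v :: bool list. length v = n}. f v * ennreal ((1/2) ^ n))"
    by (rule sum.cong) (auto simp: nn_integral_cmult_indicator Cyl_sets Cyl_measure)
  also have "\<dots> = (\<Sum>v\<in>{v :: bool list. length v = n}. f v) * ennreal ((1/2) ^ n)"
    by (simp add: sum_distrib_right)
  finally show ?thesis .
qed

lemma meas_coins:
  fixes f :: "bool list \<Rightarrow> ennreal"
  shows "(\<lambda>\<omega>. f (map \<omega> [0..<n])) \<in> borel_measurable coins"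
proof -
  have "(\<lambda>\<omega>. (\<Sum>v\<in>{v :: bool list. length v = n}. f v * indicator (Cyl n v) \<omega>)) \<in> borel_measurable coins"
    by (rule borel_measurable_sum) (auto intro: meas_ind)
  thus ?thesis by (simp only: fun_as_sum[of f, symmetric])
qed

lemma integral_mu:
  "(\<integral>\<^sup>+ r. ennreal (real (tau r)) \<partial>(mu n)) = ennreal ((\<Sum>P\<in>Pn n. real (tp P)) * (1/2) ^ n)"
proof -
  define f where "f = (\<lambda>v. ennreal (real (tp (Pof n v))))"
  have eq: "ennreal (real (tau (embedQ n \<omega>))) = f (map \<omega> [0..<n])" for \<omega>
    by (simp add: f_def tau_tp poly_part_embedQ)
  have m: "(\<lambda>r. ennreal (real (tau r))) \<in> borel_measurable (embed_measure coins (embedQ n))"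
    by (rule measurable_embed_measure1) (simp add: eq meas_coins)
  have "(\<integral>\<^sup>+ r. ennreal (real (tau r)) \<partial>(mu n)) = (\<integral>\<^sup>+ \<omega>. ennreal (real (tau (embedQ n \<omega>))) \<partial>coins)"
    unfolding mu_def by (rule nn_integral_embed_measure[OF inj_embedQ m])
  also have "\<dots> = (\<integral>\<^sup>+ \<omega>. f (map \<omega> [0..<n]) \<partial>coins)" by (simp add: eq)
  also have "\<dots> = (\<Sum>v\<in>{v :: bool list. length v = n}. f v) * ennreal ((1/2) ^ n)"
    by (rule integral_coins)
  also have "(\<Sum>v\<in>{v :: bool list. length v = n}. f v) = ennreal (\<Sum>v\<in>{v :: bool list. length v = n}. real (tp (Pof n v)))"
    by (simp add: f_def)
  also have "(\<Sum>v\<in>{v :: bool list. length v = n}. real (tp (Pof n v))) = (\<Sum>P\<in>Pn n. real (tp P))"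
    by (rule sum.reindex_bij_betw[OF Pof_bij])
  finally show ?thesis by (simp add: ennreal_mult'')
qed


theorem proposition2p12:
  fixes \<epsilon> :: real
  assumes "\<epsilon> > 0"
  shows "\<exists>n0::nat. \<forall>n\<ge>n0.
           (\<integral>\<^sup>+ r. ennreal (real (tau r)) \<partial>(mu n)) \<le> ennreal (2 * (1 + \<epsilon>) * real n)"
proof -
  obtain n0 where n0: "\<forall>n\<ge>n0. (\<Sum>P\<in>Pn n. real (tp P)) \<le> 2 * (1 + \<epsilon>) * real n * 2 ^ n"
    using comb_main[OF assms] by auto
  show ?thesis
  proof (intro exI[of _ n0] allI impI)
    fix n assume "n0 \<le> n"
    hence h: "(\<Sum>P\<in>Pn n. real (tp P)) \<le> 2 * (1 + \<epsilon>) * real n * 2 ^ n" using n0 by auto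
    have "(\<Sum>P\<in>Pn n. real (tp P)) * (1 / 2) ^ n \<le> (2 * (1 + \<epsilon>) * real n * 2 ^ n) * (1 / 2) ^ n"
      using h by (intro mult_right_mono) auto
    also have "\<dots> = 2 * (1 + \<epsilon>) * real n" by (simp add: power_one_over field_simps)
    finally have "(\<Sum>P\<in>Pn n. real (tp P)) * (1 / 2) ^ n \<le> 2 * (1 + \<epsilon>) * real n" .
    thus "(\<integral>\<^sup>+ r. ennreal (real (tau r)) \<partial>(mu n)) \<le> ennreal (2 * (1 + \<epsilon>) * real n)"
      by (simp only: integral_mu) (rule ennreal_leI)
  qed
qed

end
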